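(* Fix integers $d\ge2$, $r\ge1$ and $M>0$. There exist constants $C,c>0$ depending only on $d,r,M$ such that for all sufficiently large $n$ the following holds. Let $\{|j\rangle\}_{j=1}^{D}$, $D=d^n$, be any orthonormal basis of $(\mathbb C^d)^{\otimes n}$ consisting of eigenvectors of the translation operator $\mathcal T$ (for instance, an eigenbasis of a translation-invariant Hamiltonian with non-degenerate spectrum). Let $A$ be a traceless $r$-local operator with $\|A\|\le M$, and $A_{jj}:=\langle j|A|j\rangle$. Then for every $\delta\ge C\sqrt{(\log n)/n}$, $$\frac{|\{j: |A_{jj}|\ge\delta\}|}{D}\le e^{-cn\delta^2}.$$
   Context: $\mathcal T$ is the unitary lattice translation operator on $(\mathbb C^d)^{\otimes n}$, defined on computational basis states by $\mathcal T(|x_1\rangle\otimes\cdots\otimes|x_n\rangle)=|x_n\rangle\otimes|x_1\rangle\otimes\cdots\otimes|x_{n-1}\rangle$. An operator is $r$-local if it acts nontrivially only on at most $r$ cyclically consecutive sites. $\|\cdot\|$ is the operator norm. *)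

theory Defs
  imports "HOL-Analysis.Analysis"
begin

text \<open>Computational basis configurations of n sites with local dimension d
  (sites 0..n-1, local states 0..d-1). A state vector of (C^d)^{\<otimes> n} is a
  function from configurations to complex amplitudes; an operator is a matrix
  indexed by pairs of configurations. Only values on configurations matter.\<close>

definition configs :: "nat \<Rightarrow> nat \<Rightarrow> (nat \<Rightarrow> nat) set" where
  "configs n d = {0..<n} \<rightarrow>\<^sub>E {0..<d}"

definition inner_st :: "nat \<Rightarrow> nat \<Rightarrow> ((nat \<Rightarrow> nat) \<Rightarrow> complex) \<Rightarrow> ((nat \<Rightarrow> nat) \<Rightarrow> complex) \<Rightarrow> complex" where
  "inner_st n d \<phi> \<psi> = (\<Sum>x\<in>configs n d. cnj (\<phi> x) * \<psi> x)"

definition vnorm :: "nat \<Rightarrow> nat \<Rightarrow> ((nat \<Rightarrow> nat) \<Rightarrow> complex) \<Rightarrow> real" where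
  "vnorm n d \<psi> = sqrt (\<Sum>x\<in>configs n d. (cmod (\<psi> x))\<^sup>2)"

definition apply_op :: "nat \<Rightarrow> nat \<Rightarrow> ((nat \<Rightarrow> nat) \<Rightarrow> (nat \<Rightarrow> nat) \<Rightarrow> complex) \<Rightarrow> ((nat \<Rightarrow> nat) \<Rightarrow> complex) \<Rightarrow> ((nat \<Rightarrow> nat) \<Rightarrow> complex)" where
  "apply_op n d A \<psi> = (\<lambda>x. \<Sum>y\<in>configs n d. A x y * \<psi> y)"

definition op_norm :: "nat \<Rightarrow> nat \<Rightarrow> ((nat \<Rightarrow> nat) \<Rightarrow> (nat \<Rightarrow> nat) \<Rightarrow> complex) \<Rightarrow> real" where
  "op_norm n d A = (SUP \<psi>\<in>{\<psi>. vnorm n d \<psi> \<le> 1}. vnorm n d (apply_op n d A \<psi>))"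

definition trace_op :: "nat \<Rightarrow> nat \<Rightarrow> ((nat \<Rightarrow> nat) \<Rightarrow> (nat \<Rightarrow> nat) \<Rightarrow> complex) \<Rightarrow> complex" where
  "trace_op n d A = (\<Sum>x\<in>configs n d. A x x)"

text \<open>Lattice translation T |x_1..x_n> = |x_n x_1 .. x_{n-1}>, i.e. the basis state x is
  sent to y with y_i = x_{i-1 mod n}. Hence (T psi)(y) = psi(x) with x_i = y_{(i+1) mod n}.\<close>
definition translate :: "nat \<Rightarrow> ((nat \<Rightarrow> nat) \<Rightarrow> complex) \<Rightarrow> ((nat \<Rightarrow> nat) \<Rightarrow> complex)" where
  "translate n \<psi> = (\<lambda>y. \<psi> (\<lambda>i\<in>{0..<n}. y ((i + 1) mod n)))"

definition is_T_eigenvector :: "nat \<Rightarrow> nat \<Rightarrow> ((nat \<Rightarrow> nat) \<Rightarrow> complex) \<Rightarrow> bool" where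
  "is_T_eigenvector n d \<psi> \<longleftrightarrow>
     (\<exists>x\<in>configs n d. \<psi> x \<noteq> 0) \<and>
     (\<exists>\<mu>. \<forall>y\<in>configs n d. translate n \<psi> y = \<mu> * \<psi> y)"

text \<open>A acts as A_S \<otimes> I on the site set S.\<close>
definition acts_only_on :: "nat \<Rightarrow> nat \<Rightarrow> nat set \<Rightarrow> ((nat \<Rightarrow> nat) \<Rightarrow> (nat \<Rightarrow> nat) \<Rightarrow> complex) \<Rightarrow> bool" where
  "acts_only_on n d S A \<longleftrightarrow>
     (\<exists>a :: (nat \<Rightarrow> nat) \<Rightarrow> (nat \<Rightarrow> nat) \<Rightarrow> complex.
        \<forall>x\<in>configs n d. \<forall>y\<in>configs n d.
          A x y = (if (\<forall>i<n. i \<notin> S \<longrightarrow> x i = y i)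
                   then a (restrict x (S \<inter> {0..<n})) (restrict y (S \<inter> {0..<n})) else 0))"

text \<open>r-local: acts nontrivially only on r cyclically consecutive sites
  (acting on fewer consecutive sites is included in this).\<close>
definition r_local :: "nat \<Rightarrow> nat \<Rightarrow> nat \<Rightarrow> ((nat \<Rightarrow> nat) \<Rightarrow> (nat \<Rightarrow> nat) \<Rightarrow> complex) \<Rightarrow> bool" where
  "r_local n d r A \<longleftrightarrow>
     (\<exists>s<n. acts_only_on n d {(s + k) mod n | k. k < r} A)"

definition diag_elem :: "nat \<Rightarrow> nat \<Rightarrow> ((nat \<Rightarrow> nat) \<Rightarrow> complex) \<Rightarrow> ((nat \<Rightarrow> nat) \<Rightarrow> (nat \<Rightarrow> nat) \<Rightarrow> complex) \<Rightarrow> complex" where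
  "diag_elem n d v A = inner_st n d v (apply_op n d A v)"

end

theory Submission
  imports Defs
begin

type_synonym cfg = "nat \<Rightarrow> nat"
type_synonym opr = "cfg \<Rightarrow> cfg \<Rightarrow> complex"
type_synonym vec = "cfg \<Rightarrow> complex"

definition mm :: "nat \<Rightarrow> nat \<Rightarrow> opr \<Rightarrow> opr \<Rightarrow> opr" where
  "mm n d X Y = (\<lambda>x z. \<Sum>y\<in>configs n d. X x y * Y y z)"
definition adj :: "opr \<Rightarrow> opr" where "adj X = (\<lambda>x y. cnj (X y x))"
definition opsum :: "'i set \<Rightarrow> ('i \<Rightarrow> opr) \<Rightarrow> opr" where
  "opsum K F = (\<lambda>x y. \<Sum>t\<in>K. F t x y)"

lemma finite_configs[simp]: "finite (configs n d)"
  unfolding configs_def by (simp add: finite_PiE)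

lemma card_configs: "card (configs n d) = d ^ n"
  unfolding configs_def by (simp add: card_PiE)

lemma mm_assoc: "mm n d (mm n d X Y) Z = mm n d X (mm n d Y Z)"
  unfolding mm_def
  by (auto simp: fun_eq_iff sum_distrib_left sum_distrib_right mult.assoc intro: sum.swap[THEN trans])

lemma apply_mm: "apply_op n d (mm n d X Y) \<psi> = apply_op n d X (apply_op n d Y \<psi>)"
  unfolding mm_def apply_op_def
  by (auto simp: fun_eq_iff sum_distrib_left sum_distrib_right mult.assoc intro: sum.swap[THEN trans])

lemma adj_adj[simp]: "adj (adj X) = X" by (simp add: adj_def)

lemma adj_mm: "adj (mm n d X Y) = mm n d (adj Y) (adj X)"
  unfolding adj_def mm_def by (auto simp: fun_eq_iff mult.commute)

lemma inner_adj: "inner_st n d (apply_op n d X \<phi>) \<psi> = inner_st n d \<phi> (apply_op n d (adj X) \<psi>)"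
  unfolding inner_st_def apply_op_def adj_def
  by (auto simp: sum_distrib_left sum_distrib_right mult_ac intro: sum.swap[THEN trans])

lemma trace_mm_comm: "trace_op n d (mm n d X Y) = trace_op n d (mm n d Y X)"
  unfolding trace_op_def mm_def by (subst sum.swap) (simp add: mult.commute)

lemma trace_adj: "trace_op n d (adj X) = cnj (trace_op n d X)"
  unfolding trace_op_def adj_def by simp

lemma vnorm_sq: "(vnorm n d \<psi>)\<^sup>2 = (\<Sum>x\<in>configs n d. (cmod (\<psi> x))\<^sup>2)"
  unfolding vnorm_def by (intro real_sqrt_pow2 sum_nonneg) simp

lemma cnj_mult_self: "cnj z * z = complex_of_real ((cmod z)\<^sup>2)"
  by (metis complex_norm_square mult.commute)

lemma vnorm_nonneg: "vnorm n d \<psi> \<ge> 0" unfolding vnorm_def by (intro real_sqrt_ge_zero sum_nonneg) simp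

lemma inner_self: "inner_st n d \<psi> \<psi> = complex_of_real ((vnorm n d \<psi>)\<^sup>2)"
  unfolding vnorm_sq inner_st_def
  by (simp add: cnj_mult_self of_real_sum)

lemma inner_CS: "cmod (inner_st n d \<phi> \<psi>) \<le> vnorm n d \<phi> * vnorm n d \<psi>"
proof -
  have "cmod (inner_st n d \<phi> \<psi>) \<le> (\<Sum>x\<in>configs n d. cmod (\<phi> x) * cmod (\<psi> x))"
    unfolding inner_st_def by (rule order_trans[OF norm_sum]) (simp add: norm_mult)
  also have "\<dots> \<le> vnorm n d \<phi> * vnorm n d \<psi>"
  proof -
    have "(\<Sum>x\<in>configs n d. cmod (\<phi> x) * cmod (\<psi> x))\<^sup>2 \<le> (vnorm n d \<phi> * vnorm n d \<psi>)\<^sup>2"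
      unfolding power_mult_distrib vnorm_sq by (rule Cauchy_Schwarz_ineq_sum)
    thus ?thesis using vnorm_nonneg
      by (meson mult_nonneg_nonneg power2_le_imp_le)
  qed
  finally show ?thesis .
qed

lemma trace_adj_mm_self: "trace_op n d (mm n d (adj W) W) = complex_of_real (\<Sum>x\<in>configs n d. \<Sum>y\<in>configs n d. (cmod (W x y))\<^sup>2)"
  unfolding trace_op_def mm_def adj_def
  apply (subst sum.swap)
  unfolding of_real_sum by (intro sum.cong refl) (metis cnj_mult_self)


fun mp :: "nat \<Rightarrow> nat \<Rightarrow> (nat \<Rightarrow> opr) \<Rightarrow> nat \<Rightarrow> opr" where
  "mp n d F 0 = F 0"
| "mp n d F (Suc k) = mm n d (mp n d F k) (F (Suc k))"

lemma mp_cong: "(\<And>i. i \<le> k \<Longrightarrow> F i = G i) \<Longrightarrow> mp n d F k = mp n d G k"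
  by (induction k) auto

lemma mp_left: "mp n d F (Suc k) = mm n d (F 0) (mp n d (\<lambda>i. F (Suc i)) k)"
proof (induction k)
  case 0 then show ?case by simp
next
  case (Suc k)
  then show ?case by (simp add: mm_assoc)
qed

lemma mp_concat: "mm n d (mp n d F k) (mp n d G l) = mp n d (\<lambda>i. if i \<le> k then F i else G (i - Suc k)) (k + Suc l)"
proof (induction l)
  case 0
  have "mp n d F k = mp n d (\<lambda>i. if i \<le> k then F i else G (i - Suc k)) k"
    by (rule mp_cong) simp
  then show ?case by simp
next
  case (Suc l)
  have "mm n d (mp n d F k) (mp n d G (Suc l)) = mm n d (mm n d (mp n d F k) (mp n d G l)) (G (Suc l))"
    by (simp add: mm_assoc)
  also have "\<dots> = mp n d (\<lambda>i. if i \<le> k then F i else G (i - Suc k)) (k + Suc (Suc l))"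
    using Suc by (simp add: Suc_diff_le)
  finally show ?case .
qed

lemma adj_mp: "adj (mp n d F k) = mp n d (\<lambda>i. adj (F (k - i))) k"
proof (induction k)
  case 0 then show ?case by simp
next
  case (Suc k)
  have "adj (mp n d F (Suc k)) = mm n d (adj (F (Suc k))) (mp n d (\<lambda>i. adj (F (k - i))) k)"
    using Suc by (simp add: adj_mm)
  also have "\<dots> = mp n d (\<lambda>i. adj (F (Suc k - i))) (Suc k)"
    by (subst mp_left) simp
  finally show ?case .
qed

lemma vnorm_apply_mp:
  assumes "M \<ge> 0" and "\<And>i \<psi>. i \<le> k \<Longrightarrow> vnorm n d (apply_op n d (F i) \<psi>) \<le> M * vnorm n d \<psi>"
  shows "vnorm n d (apply_op n d (mp n d F k) \<psi>) \<le> M ^ Suc k * vnorm n d \<psi>"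
  using assms(2)
proof (induction k arbitrary: \<psi>)
  case 0 then show ?case by simp
next
  case (Suc k)
  have "vnorm n d (apply_op n d (mp n d F (Suc k)) \<psi>) = vnorm n d (apply_op n d (mp n d F k) (apply_op n d (F (Suc k)) \<psi>))"
    by (simp add: apply_mm)
  also have "\<dots> \<le> M ^ Suc k * vnorm n d (apply_op n d (F (Suc k)) \<psi>)"
    using Suc by simp
  also have "\<dots> \<le> M ^ Suc k * (M * vnorm n d \<psi>)"
    using Suc.prems[of "Suc k" \<psi>] assms(1) by (intro mult_left_mono) auto
  finally show ?case by (simp add: mult_ac)
qed

lemma trace_rot1: "trace_op n d (mp n d F (Suc k)) = trace_op n d (mp n d (\<lambda>i. F ((i + 1) mod (Suc (Suc k)))) (Suc k))"
proof -
  have "trace_op n d (mp n d F (Suc k)) = trace_op n d (mm n d (mp n d (\<lambda>i. F (Suc i)) k) (F 0))"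
    by (subst mp_left) (rule trace_mm_comm)
  also have "mp n d (\<lambda>i. F (Suc i)) k = mp n d (\<lambda>i. F ((i + 1) mod (Suc (Suc k)))) k"
    by (rule mp_cong) simp
  finally show ?thesis by simp
qed

lemma trace_rot: "trace_op n d (mp n d F k) = trace_op n d (mp n d (\<lambda>i. F ((i + s) mod (Suc k))) k)"
proof (cases k)
  case 0 then show ?thesis by simp
next
  case (Suc k')
  show ?thesis
  proof (induction s)
    case 0
    have "mp n d F k = mp n d (\<lambda>i. F ((i + 0) mod Suc k)) k" by (rule mp_cong) simp
    then show ?case by simp
  next
    case (Suc s)
    have "trace_op n d (mp n d (\<lambda>i. F ((i + s) mod (Suc k))) k)
        = trace_op n d (mp n d (\<lambda>i. F (((i + 1) mod (Suc k) + s) mod (Suc k))) k)"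
      using trace_rot1[of n d "\<lambda>i. F ((i + s) mod (Suc k))" k'] \<open>k = Suc k'\<close> by (simp del: mp.simps)
    also have "mp n d (\<lambda>i. F (((i + 1) mod (Suc k) + s) mod (Suc k))) k = mp n d (\<lambda>i. F ((i + Suc s) mod (Suc k))) k"
      by (rule mp_cong) (simp add: mod_add_left_eq)
    finally show ?case using Suc.IH by simp
  qed
qed

lemma sum_PiE_insert:
  assumes "x \<notin> S"
  shows "sum f (Pi\<^sub>E (insert x S) T) = (\<Sum>y\<in>T x. \<Sum>g\<in>Pi\<^sub>E S T. f (g(x := y)))"
  unfolding PiE_insert_eq
  by (subst sum.reindex[OF inj_combinator[OF assms]]) (simp add: sum.cartesian_product case_prod_beta)

lemma mp_expand:
  "mp n d (\<lambda>i. opsum K (\<Phi> i)) k = opsum ({0..k} \<rightarrow>\<^sub>E K) (\<lambda>\<tau>. mp n d (\<lambda>i. \<Phi> i (\<tau> i)) k)"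
proof (induction k)
  case 0
  have e: "{0..0::nat} = insert 0 {}" by auto
  show ?case unfolding e opsum_def
    by (auto simp: fun_eq_iff sum_PiE_insert)
next
  case (Suc k)
  have e: "{0..Suc k} = insert (Suc k) {0..k}" by auto
  have c: "\<And>\<tau> t. mp n d (\<lambda>i. \<Phi> i (if i = Suc k then t else \<tau> i)) k = mp n d (\<lambda>i. \<Phi> i (\<tau> i)) k"
    by (rule mp_cong) simp
  have sw: "(\<Sum>y\<in>A. \<Sum>i\<in>C. \<Sum>j\<in>B. f y j i) = (\<Sum>i\<in>C. \<Sum>j\<in>B. \<Sum>y\<in>A. f y j i)" for A B C and f :: "_ \<Rightarrow> _ \<Rightarrow> _ \<Rightarrow> complex"
  proof -
    have "(\<Sum>y\<in>A. \<Sum>i\<in>C. \<Sum>j\<in>B. f y j i) = (\<Sum>i\<in>C. \<Sum>y\<in>A. \<Sum>j\<in>B. f y j i)" by (rule sum.swap)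
    also have "\<dots> = (\<Sum>i\<in>C. \<Sum>j\<in>B. \<Sum>y\<in>A. f y j i)" by (intro sum.cong refl sum.swap)
    finally show ?thesis .
  qed
  show ?case
    unfolding e opsum_def
    apply (simp add: Suc[unfolded opsum_def] sum_PiE_insert c)
    apply (simp add: mm_def fun_eq_iff sum_distrib_left sum_distrib_right)
    by (intro allI sw)
qed


definition upd :: "nat set \<Rightarrow> cfg \<Rightarrow> cfg \<Rightarrow> cfg" where
  "upd T w x = (\<lambda>i. if i \<in> T then w i else x i)"

lemma upd_configs: "w \<in> configs n d \<Longrightarrow> x \<in> configs n d \<Longrightarrow> upd T w x \<in> configs n d"
  unfolding configs_def upd_def by (auto simp: PiE_iff extensional_def)

lemma configs_undef: "x \<in> configs n d \<Longrightarrow> \<not> i < n \<Longrightarrow> x i = undefined"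
  unfolding configs_def PiE_def extensional_def by auto

lemma configs_range: "x \<in> configs n d \<Longrightarrow> i < n \<Longrightarrow> x i < d"
  unfolding configs_def PiE_def by auto

lemma configs_neq: "x \<in> configs n d \<Longrightarrow> y \<in> configs n d \<Longrightarrow> x \<noteq> y \<Longrightarrow> \<exists>i<n. x i \<noteq> y i"
  using configs_undef by (metis ext)

definition triv :: "nat \<Rightarrow> nat \<Rightarrow> nat set \<Rightarrow> opr \<Rightarrow> bool" where
  "triv n d T Z \<longleftrightarrow>
    (\<forall>x\<in>configs n d. \<forall>y\<in>configs n d. (\<exists>i\<in>T. x i \<noteq> y i) \<longrightarrow> Z x y = 0) \<and>
    (\<forall>x\<in>configs n d. \<forall>y\<in>configs n d. \<forall>w\<in>configs n d. (\<forall>i\<in>T. x i = y i) \<longrightarrow> Z (upd T w x) (upd T w y) = Z x y)"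

lemma triv_mm:
  assumes X: "triv n d T X" and Y: "triv n d T Y"
  shows "triv n d T (mm n d X Y)"
  unfolding triv_def
proof (intro conjI ballI impI)
  fix x z assume x: "x \<in> configs n d" and z: "z \<in> configs n d" and "\<exists>i\<in>T. x i \<noteq> z i"
  then obtain i where i: "i \<in> T" "x i \<noteq> z i" by blast
  have "X x y * Y y z = 0" if "y \<in> configs n d" for y
  proof (cases "x i = y i")
    case True
    then have "Y y z = 0" using Y i that z unfolding triv_def by metis
    then show ?thesis by simp
  next
    case False
    then have "X x y = 0" using X i that x unfolding triv_def by metis
    then show ?thesis by simp
  qed
  then have "\<forall>y\<in>configs n d. X x y * Y y z = 0" by blast
  then show "mm n d X Y x z = 0" unfolding mm_def by (rule sum.neutral)
next
  fix x z w assume x: "x \<in> configs n d" and z: "z \<in> configs n d" and w: "w \<in> configs n d"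
    and xz: "\<forall>i\<in>T. x i = z i"
  define Yx where "Yx = {y \<in> configs n d. \<forall>i\<in>T. y i = x i}"
  define Yw where "Yw = {y \<in> configs n d. \<forall>i\<in>T. y i = w i}"
  have ux: "upd T w x \<in> configs n d" and uz: "upd T w z \<in> configs n d"
    using upd_configs x z w by auto
  have 1: "mm n d X Y x z = (\<Sum>y\<in>Yx. X x y * Y y z)"
    unfolding mm_def
  proof (rule sum.mono_neutral_right)
    show "\<forall>y\<in>configs n d - Yx. X x y * Y y z = 0"
    proof
      fix y assume "y \<in> configs n d - Yx"
      then obtain i where "i \<in> T" "x i \<noteq> y i" "y \<in> configs n d" unfolding Yx_def by auto
      then have "X x y = 0" using X x unfolding triv_def by metis
      then show "X x y * Y y z = 0" by simp
    qed
  qed (auto simp: Yx_def)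
  have 2: "mm n d X Y (upd T w x) (upd T w z) = (\<Sum>y\<in>Yw. X (upd T w x) y * Y y (upd T w z))"
    unfolding mm_def
  proof (rule sum.mono_neutral_right)
    show "\<forall>y\<in>configs n d - Yw. X (upd T w x) y * Y y (upd T w z) = 0"
    proof
      fix y assume "y \<in> configs n d - Yw"
      then obtain i where "i \<in> T" "upd T w x i \<noteq> y i" "y \<in> configs n d" unfolding Yw_def upd_def by auto
      then have "X (upd T w x) y = 0" using X ux unfolding triv_def by metis
      then show "X (upd T w x) y * Y y (upd T w z) = 0" by simp
    qed
  qed (auto simp: Yw_def)
  have 3: "(\<Sum>y\<in>Yx. X x y * Y y z) = (\<Sum>y\<in>Yw. X (upd T w x) y * Y y (upd T w z))"
  proof (rule sum.reindex_bij_witness[where i="upd T x" and j="upd T w"])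
    fix a assume a: "a \<in> Yx"
    show "upd T x (upd T w a) = a" using a unfolding Yx_def upd_def by (auto simp: fun_eq_iff)
    show "upd T w a \<in> Yw" using a w upd_configs[OF w, of a T] unfolding Yx_def Yw_def by (auto simp: upd_def)
    have a1: "a \<in> configs n d" and a2: "\<forall>i\<in>T. a i = x i" using a unfolding Yx_def by auto
    have "X (upd T w x) (upd T w a) = X x a" using X x a1 w a2 unfolding triv_def by metis
    moreover have "Y (upd T w a) (upd T w z) = Y a z" using Y z a1 w a2 xz unfolding triv_def by metis
    ultimately show "X (upd T w x) (upd T w a) * Y (upd T w a) (upd T w z) = X x a * Y a z" by simp
  next
    fix b assume b: "b \<in> Yw"
    show "upd T w (upd T x b) = b" using b unfolding Yw_def upd_def by (auto simp: fun_eq_iff)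
    show "upd T x b \<in> Yx" using b x upd_configs[OF x, of b T] unfolding Yx_def Yw_def by (auto simp: upd_def)
  qed
  show "mm n d X Y (upd T w x) (upd T w z) = mm n d X Y x z"
    using 1 2 3 by simp
qed

lemma triv_mp: "(\<And>i. i \<le> k \<Longrightarrow> triv n d T (F i)) \<Longrightarrow> triv n d T (mp n d F k)"
  by (induction k) (auto intro: triv_mm)

lemma aoo_triv:
  assumes "acts_only_on n d S X" and "T \<inter> S = {}"
  shows "triv n d T X"
proof -
  obtain a where H: "\<forall>x\<in>configs n d. \<forall>y\<in>configs n d.
          X x y = (if (\<forall>i<n. i \<notin> S \<longrightarrow> x i = y i)
                   then a (restrict x (S \<inter> {0..<n})) (restrict y (S \<inter> {0..<n})) else 0)"
    using assms(1) unfolding acts_only_on_def by blast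
  show ?thesis unfolding triv_def
  proof (intro conjI ballI impI)
    fix x y assume x: "x \<in> configs n d" and y: "y \<in> configs n d" and "\<exists>i\<in>T. x i \<noteq> y i"
    then obtain i where i: "i \<in> T" "x i \<noteq> y i" by blast
    then have "i < n" using configs_undef x y by metis
    moreover have "i \<notin> S" using i assms(2) by blast
    ultimately show "X x y = 0" using H x y i by auto
  next
    fix x y w assume x: "x \<in> configs n d" and y: "y \<in> configs n d" and w: "w \<in> configs n d"
      and xy: "\<forall>i\<in>T. x i = y i"
    have c: "(\<forall>i<n. i \<notin> S \<longrightarrow> upd T w x i = upd T w y i) = (\<forall>i<n. i \<notin> S \<longrightarrow> x i = y i)"
      using xy unfolding upd_def by auto
    have r1: "restrict (upd T w x) (S \<inter> {0..<n}) = restrict x (S \<inter> {0..<n})"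
      using assms(2) unfolding upd_def restrict_def by (auto simp: fun_eq_iff)
    have r2: "restrict (upd T w y) (S \<inter> {0..<n}) = restrict y (S \<inter> {0..<n})"
      using assms(2) unfolding upd_def restrict_def by (auto simp: fun_eq_iff)
    have "X (upd T w x) (upd T w y) = (if (\<forall>i<n. i \<notin> S \<longrightarrow> upd T w x i = upd T w y i)
                   then a (restrict (upd T w x) (S \<inter> {0..<n})) (restrict (upd T w y) (S \<inter> {0..<n})) else 0)"
      by (rule H[rule_format, OF upd_configs[OF w x, of T] upd_configs[OF w y, of T]])
    also have "\<dots> = (if (\<forall>i<n. i \<notin> S \<longrightarrow> x i = y i)
                   then a (restrict x (S \<inter> {0..<n})) (restrict y (S \<inter> {0..<n})) else 0)"
      unfolding c r1 r2 by (rule refl)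
    also have "\<dots> = X x y" by (rule H[rule_format, OF x y, symmetric])
    finally show "X (upd T w x) (upd T w y) = X x y" .
  qed
qed

lemma aoo_adj:
  assumes "acts_only_on n d S X"
  shows "acts_only_on n d S (adj X)"
proof -
  obtain a where H: "\<forall>x\<in>configs n d. \<forall>y\<in>configs n d.
          X x y = (if (\<forall>i<n. i \<notin> S \<longrightarrow> x i = y i)
                   then a (restrict x (S \<inter> {0..<n})) (restrict y (S \<inter> {0..<n})) else 0)"
    using assms(1) unfolding acts_only_on_def by blast
  show ?thesis unfolding acts_only_on_def
    by (rule exI[where x="\<lambda>u v. cnj (a v u)"]) (auto simp: adj_def H)
qed

lemma sum_fst_times: "(\<Sum>p\<in>A \<times> B. (f (fst p) :: complex)) = of_nat (card B) * sum f A"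
proof -
  have "(\<Sum>p\<in>A \<times> B. f (fst p)) = (\<Sum>x\<in>A. \<Sum>w\<in>B. f x)"
    using sum.cartesian_product[where g="\<lambda>x w. f x" and A=A and B=B] by (simp add: case_prod_beta)
  also have "\<dots> = of_nat (card B) * sum f A" by (simp add: sum_distrib_right mult.commute)
  finally show ?thesis .
qed

lemma trace_vanish:
  assumes "d > 0" and aoo: "acts_only_on n d S X" and tr: "trace_op n d X = 0" and Z: "triv n d S Z"
  shows "trace_op n d (mm n d X Z) = 0"
proof -
  obtain a where H: "\<forall>x\<in>configs n d. \<forall>y\<in>configs n d.
          X x y = (if (\<forall>i<n. i \<notin> S \<longrightarrow> x i = y i)
                   then a (restrict x (S \<inter> {0..<n})) (restrict y (S \<inter> {0..<n})) else 0)"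
    using aoo unfolding acts_only_on_def by blast
  let ?CF = "configs n d"
  have off: "X x y * Z y x = 0" if x: "x \<in> ?CF" and y: "y \<in> ?CF" and "y \<noteq> x" for x y
  proof -
    obtain i where i: "i < n" "x i \<noteq> y i" using configs_neq[OF x y] \<open>y \<noteq> x\<close> by metis
    show ?thesis
    proof (cases "i \<in> S")
      case True
      then have "Z y x = 0" using Z x y i unfolding triv_def by metis
      then show ?thesis by simp
    next
      case False
      then have "X x y = 0" using H x y i by auto
      then show ?thesis by simp
    qed
  qed
  have diag: "trace_op n d (mm n d X Z) = (\<Sum>x\<in>?CF. X x x * Z x x)"
    unfolding trace_op_def mm_def
  proof (rule sum.cong[OF refl])
    fix x assume x: "x \<in> ?CF"
    have "(\<Sum>y\<in>?CF. X x y * Z y x) = (\<Sum>y\<in>?CF. if y = x then X x x * Z x x else 0)"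
      by (rule sum.cong[OF refl]) (use off x in auto)
    also have "\<dots> = X x x * Z x x" using x by simp
    finally show "(\<Sum>y\<in>?CF. X x y * Z y x) = X x x * Z x x" .
  qed
  have Xd: "X (upd S x w) (upd S x w) = X x x" if x: "x \<in> ?CF" and w: "w \<in> ?CF" for x w
  proof -
    have "restrict (upd S x w) (S \<inter> {0..<n}) = restrict x (S \<inter> {0..<n})"
      unfolding upd_def restrict_def by (auto simp: fun_eq_iff)
    then show ?thesis using H x upd_configs[OF x w, of S] by simp
  qed
  have Zd: "Z (upd S x w) (upd S x w) = Z w w" if x: "x \<in> ?CF" and w: "w \<in> ?CF" for x w
    using Z x w unfolding triv_def by blast
  define \<phi> where "\<phi> p = (upd S (fst p) (snd p), upd S (snd p) (fst p))" for p
  have "(\<Sum>p\<in>?CF \<times> ?CF. X (fst p) (fst p) * Z (snd p) (snd p)) = (\<Sum>p\<in>?CF \<times> ?CF. X (fst p) (fst p) * Z (fst p) (fst p))"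
  proof (rule sum.reindex_bij_witness[where i=\<phi> and j=\<phi>])
    have inv: "\<phi> (\<phi> p) = p" for p unfolding \<phi>_def upd_def by (auto simp: fun_eq_iff prod_eq_iff)
    have mem: "\<phi> p \<in> ?CF \<times> ?CF" if "p \<in> ?CF \<times> ?CF" for p using that unfolding \<phi>_def by (auto simp: upd_configs)
    fix p assume "p \<in> ?CF \<times> ?CF"
    show "\<phi> (\<phi> p) = p" by (rule inv)
    show "\<phi> p \<in> ?CF \<times> ?CF" using mem \<open>p \<in> ?CF \<times> ?CF\<close> by blast
    show "\<phi> (\<phi> p) = p" by (rule inv)
    show "\<phi> p \<in> ?CF \<times> ?CF" using mem \<open>p \<in> ?CF \<times> ?CF\<close> by blast
    show "X (fst (\<phi> p)) (fst (\<phi> p)) * Z (fst (\<phi> p)) (fst (\<phi> p)) = X (fst p) (fst p) * Z (snd p) (snd p)"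
    proof -
      obtain x w where p: "p = (x, w)" "x \<in> ?CF" "w \<in> ?CF" using \<open>p \<in> ?CF \<times> ?CF\<close> by blast
      show ?thesis unfolding p \<phi>_def fst_conv snd_conv using Xd[OF p(2,3)] Zd[OF p(2,3)] by simp
    qed
  qed
  moreover have "(\<Sum>p\<in>?CF \<times> ?CF. X (fst p) (fst p) * Z (snd p) (snd p)) = trace_op n d X * trace_op n d Z"
    unfolding trace_op_def sum_product sum.cartesian_product by (simp add: case_prod_beta)
  moreover have "(\<Sum>p\<in>?CF \<times> ?CF. X (fst p) (fst p) * Z (fst p) (fst p)) = of_nat (card ?CF) * (\<Sum>x\<in>?CF. X x x * Z x x)"
    by (rule sum_fst_times[where f="\<lambda>x. X x x * Z x x"])
  ultimately have "of_nat (card ?CF) * (\<Sum>x\<in>?CF. X x x * Z x x) = 0" using tr by simp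
  moreover have "?CF \<noteq> {}" using assms(1) card_configs[of n d] by (metis card.empty power_not_zero not_gr0)
  ultimately show ?thesis using diag by simp
qed


lemma sig_left: "(n::nat) > 0 \<Longrightarrow> i < n \<Longrightarrow> ((i + k) mod n + (n - k mod n)) mod n = i"
proof -
  assume n: "n > 0" and i: "i < n"
  have km: "k mod n < n" using n by simp
  have k: "n * (k div n) + k mod n = k" by (rule mult_div_mod_eq)
  have "i + k + (n - k mod n) = i + n * (k div n) + n" using km k by linarith
  then have e: "i + k + (n - k mod n) = i + (k div n + 1) * n" by (simp add: algebra_simps)
  have "((i + k) mod n + (n - k mod n)) mod n = (i + k + (n - k mod n)) mod n"
    by (simp add: mod_add_left_eq)
  also have "\<dots> = i" unfolding e mod_mult_self1 using i by simp
  finally show ?thesis .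
qed

lemma sig_inj: "(n::nat) > 0 \<Longrightarrow> i < n \<Longrightarrow> i' < n \<Longrightarrow> (i + k) mod n = (i' + k) mod n \<Longrightarrow> i = i'"
  using sig_left[of n i k] sig_left[of n i' k] by metis

lemma sig_surj: "(n::nat) > 0 \<Longrightarrow> i < n \<Longrightarrow> ((i + (n - k mod n)) mod n + k) mod n = i"
proof -
  assume n: "n > 0" and i: "i < n"
  have km: "k mod n < n" using n by simp
  have k: "n * (k div n) + k mod n = k" by (rule mult_div_mod_eq)
  have "i + (n - k mod n) + k = i + n * (k div n) + n" using km k by linarith
  then have e: "i + (n - k mod n) + k = i + (k div n + 1) * n" by (simp add: algebra_simps)
  have "((i + (n - k mod n)) mod n + k) mod n = (i + (n - k mod n) + k) mod n"
    by (simp add: mod_add_left_eq)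
  also have "\<dots> = i" unfolding e mod_mult_self1 using i by simp
  finally show ?thesis .
qed

lemma sig_mem: "(n::nat) > 0 \<Longrightarrow> s < n \<Longrightarrow> ((s + j) mod n + (t + n - s) mod n) mod n = (t + j) mod n"
proof -
  assume "n > 0" "s < n"
  have "((s + j) mod n + (t + n - s) mod n) mod n = (s + j + (t + n - s)) mod n"
    by (simp add: mod_add_eq)
  also have "s + j + (t + n - s) = (t + j) + n" using \<open>s < n\<close> by simp
  finally show ?thesis by simp
qed


definition rot :: "nat \<Rightarrow> nat \<Rightarrow> cfg \<Rightarrow> cfg" where
  "rot n k x = (\<lambda>i\<in>{0..<n}. x ((i + k) mod n))"

definition trans_op :: "nat \<Rightarrow> nat \<Rightarrow> opr \<Rightarrow> opr" where
  "trans_op n k A = (\<lambda>x y. A (rot n k x) (rot n k y))"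

lemma rot_configs: "x \<in> configs n d \<Longrightarrow> rot n k x \<in> configs n d"
  unfolding configs_def rot_def by (auto simp: PiE_iff)

lemma rot_inj: "inj_on (rot n k) (configs n d)"
proof (rule inj_onI)
  fix x x' assume x: "x \<in> configs n d" and x': "x' \<in> configs n d" and e: "rot n k x = rot n k x'"
  show "x = x'"
  proof
    fix i show "x i = x' i"
    proof (cases "i < n")
      case False then show ?thesis using configs_undef x x' by metis
    next
      case True
      then have n: "n > 0" by simp
      define i' where "i' = (i + (n - k mod n)) mod n"
      have i': "i' < n" unfolding i'_def using n by simp
      have "(i' + k) mod n = i" unfolding i'_def using sig_surj[OF n True] .
      moreover have "rot n k x i' = rot n k x' i'" using e by simp
      ultimately show ?thesis using i' unfolding rot_def by simp
    qed
  qed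
qed

lemma rot_bij: "bij_betw (rot n k) (configs n d) (configs n d)"
  unfolding bij_betw_def using rot_inj endo_inj_surj[OF finite_configs _ rot_inj] rot_configs by blast

lemma sum_rot: "(\<Sum>x\<in>configs n d. f (rot n k x)) = (\<Sum>x\<in>configs n d. f x)"
  by (rule sum.reindex_bij_betw[OF rot_bij])

lemma rot_0: assumes "x \<in> configs n d" shows "rot n 0 x = x"
proof
  fix i show "rot n 0 x i = x i"
    using configs_undef[OF assms, of i] unfolding rot_def by (cases "i < n") auto
qed

lemma rot_Suc: "rot n 1 (rot n k x) = rot n (Suc k) x"
  unfolding rot_def by (auto simp: fun_eq_iff mod_add_left_eq)

lemma vnorm_cong: "(\<And>x. x \<in> configs n d \<Longrightarrow> f x = g x) \<Longrightarrow> vnorm n d f = vnorm n d g"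
  unfolding vnorm_def by simp

lemma vnorm_rot: "vnorm n d (\<lambda>x. f (rot n k x)) = vnorm n d f"
  unfolding vnorm_def using sum_rot[of "\<lambda>x. (cmod (f x))\<^sup>2"] by simp

lemma eigen_rot:
  assumes "is_T_eigenvector n d \<psi>" and "vnorm n d \<psi> = 1"
  shows "\<exists>\<mu>. cmod \<mu> = 1 \<and> (\<forall>k. \<forall>y\<in>configs n d. \<psi> (rot n k y) = \<mu> ^ k * \<psi> y)"
proof -
  obtain \<mu> where mu: "\<forall>y\<in>configs n d. \<psi> (rot n 1 y) = \<mu> * \<psi> y"
    using assms(1) unfolding is_T_eigenvector_def translate_def rot_def by blast
  have all: "\<forall>y\<in>configs n d. \<psi> (rot n k y) = \<mu> ^ k * \<psi> y" for k
  proof (induction k)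
    case 0 then show ?case by (simp add: rot_0)
  next
    case (Suc k)
    show ?case
    proof
      fix y assume y: "y \<in> configs n d"
      have "\<psi> (rot n (Suc k) y) = \<psi> (rot n 1 (rot n k y))" using rot_Suc[of n k y] by simp
      also have "\<dots> = \<mu> * \<psi> (rot n k y)" using mu rot_configs[OF y] by blast
      also have "\<dots> = \<mu> ^ Suc k * \<psi> y" using Suc y by simp
      finally show "\<psi> (rot n (Suc k) y) = \<mu> ^ Suc k * \<psi> y" .
    qed
  qed
  have "1 = (vnorm n d \<psi>)\<^sup>2" using assms(2) by simp
  also have "\<dots> = (vnorm n d (\<lambda>y. \<psi> (rot n 1 y)))\<^sup>2" by (simp add: vnorm_rot)
  also have "\<dots> = (vnorm n d (\<lambda>y. \<mu> * \<psi> y))\<^sup>2"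
  proof -
    have "vnorm n d (\<lambda>y. \<psi> (rot n 1 y)) = vnorm n d (\<lambda>y. \<mu> * \<psi> y)" by (rule vnorm_cong) (use mu in auto)
    then show ?thesis by simp
  qed
  also have "\<dots> = (cmod \<mu>)\<^sup>2 * (vnorm n d \<psi>)\<^sup>2"
    unfolding vnorm_sq by (simp add: norm_mult power_mult_distrib sum_distrib_left)
  also have "\<dots> = (cmod \<mu>)\<^sup>2" using assms(2) by simp
  finally have "cmod \<mu> = 1 \<or> cmod \<mu> = - 1" by (simp add: power2_eq_1_iff)
  then have "cmod \<mu> = 1" using norm_ge_zero[of \<mu>] by linarith
  then show ?thesis using all by blast
qed

lemma diag_trans:
  assumes "cmod \<mu> = 1" and e: "\<forall>y\<in>configs n d. \<psi> (rot n k y) = \<mu> ^ k * \<psi> y"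
  shows "inner_st n d \<psi> (apply_op n d A \<psi>) = inner_st n d \<psi> (apply_op n d (trans_op n k A) \<psi>)"
proof -
  let ?CF = "configs n d"
  have "inner_st n d \<psi> (apply_op n d A \<psi>) = (\<Sum>u\<in>?CF. cnj (\<psi> u) * (\<Sum>v\<in>?CF. A u v * \<psi> v))"
    unfolding inner_st_def apply_op_def ..
  also have "\<dots> = (\<Sum>x\<in>?CF. cnj (\<psi> (rot n k x)) * (\<Sum>v\<in>?CF. A (rot n k x) v * \<psi> v))"
    by (rule sum_rot[symmetric])
  also have "\<dots> = (\<Sum>x\<in>?CF. cnj (\<psi> (rot n k x)) * (\<Sum>y\<in>?CF. A (rot n k x) (rot n k y) * \<psi> (rot n k y)))"
    by (subst sum_rot[symmetric, where f="\<lambda>v. A _ v * \<psi> v"]) (rule refl)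
  also have "\<dots> = (\<Sum>x\<in>?CF. (cnj (\<mu> ^ k) * \<mu> ^ k) * (cnj (\<psi> x) * (\<Sum>y\<in>?CF. A (rot n k x) (rot n k y) * \<psi> y)))"
    by (intro sum.cong refl) (simp add: e sum_distrib_left mult_ac)
  also have "cnj (\<mu> ^ k) * \<mu> ^ k = 1"
  proof -
    have "cnj \<mu> * \<mu> = 1" using assms(1) cnj_mult_self[of \<mu>] by simp
    then have "(cnj \<mu> * \<mu>) ^ k = 1" by simp
    then show ?thesis by (simp add: power_mult_distrib)
  qed
  finally show ?thesis unfolding inner_st_def apply_op_def trans_op_def by simp
qed

lemma trace_trans: "trace_op n d (trans_op n k A) = trace_op n d A"
  unfolding trace_op_def trans_op_def by (rule sum_rot)

lemma norm_trans:
  assumes "\<And>\<phi>. vnorm n d (apply_op n d A \<phi>) \<le> M * vnorm n d \<phi>"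
  shows "vnorm n d (apply_op n d (trans_op n k A) \<psi>) \<le> M * vnorm n d \<psi>"
proof -
  let ?CF = "configs n d"
  define \<phi> where "\<phi> = (\<lambda>y. \<psi> (the_inv_into ?CF (rot n k) y))"
  have \<phi>r: "\<phi> (rot n k y) = \<psi> y" if "y \<in> ?CF" for y
    unfolding \<phi>_def using the_inv_into_f_f[OF rot_inj that] by simp
  have ap: "apply_op n d (trans_op n k A) \<psi> = (\<lambda>x. apply_op n d A \<phi> (rot n k x))"
  proof
    fix x
    have "apply_op n d (trans_op n k A) \<psi> x = (\<Sum>y\<in>?CF. A (rot n k x) (rot n k y) * \<phi> (rot n k y))"
      unfolding apply_op_def trans_op_def by (intro sum.cong refl) (simp add: \<phi>r)
    also have "\<dots> = apply_op n d A \<phi> (rot n k x)"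
      unfolding apply_op_def by (rule sum_rot)
    finally show "apply_op n d (trans_op n k A) \<psi> x = apply_op n d A \<phi> (rot n k x)" .
  qed
  have "vnorm n d \<phi> = vnorm n d \<psi>"
    using vnorm_rot[of n d \<phi> k] \<phi>r vnorm_cong[of n d "\<lambda>y. \<phi> (rot n k y)" \<psi>] by simp
  then show ?thesis unfolding ap vnorm_rot using assms[of \<phi>] by simp
qed

lemma aoo_trans:
  assumes n: "n > 0" and s: "s < n" and t: "t < n"
    and A: "acts_only_on n d {(s + j) mod n | j. j < r} A"
  shows "acts_only_on n d {(t + j) mod n | j. j < r} (trans_op n ((t + n - s) mod n) A)"
proof -
  define k where "k = (t + n - s) mod n"
  define S where "S = {(s + j) mod n | j. j < r}"
  define T where "T = {(t + j) mod n | j. j < r}"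
  define \<sigma> where "\<sigma> i = (i + k) mod n" for i
  have \<sigma>lt: "\<sigma> i < n" for i unfolding \<sigma>_def using n by simp
  have memb: "i \<in> S \<longleftrightarrow> \<sigma> i \<in> T" if i: "i < n" for i
  proof
    assume "i \<in> S"
    then obtain j where j: "j < r" "i = (s + j) mod n" unfolding S_def by blast
    then have "\<sigma> i = (t + j) mod n" unfolding \<sigma>_def k_def using sig_mem[OF n s] by simp
    then show "\<sigma> i \<in> T" unfolding T_def using j by blast
  next
    assume "\<sigma> i \<in> T"
    then obtain j where j: "j < r" "\<sigma> i = (t + j) mod n" unfolding T_def by blast
    have "\<sigma> ((s + j) mod n) = (t + j) mod n" unfolding \<sigma>_def k_def using sig_mem[OF n s] by simp
    then have "(s + j) mod n = i" using sig_inj[OF n _ i, of "(s + j) mod n" k] j n unfolding \<sigma>_def by simp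
    then show "i \<in> S" unfolding S_def using j by blast
  qed
  have surj: "\<exists>i<n. \<sigma> i = i'" if "i' < n" for i'
    using sig_surj[OF n that, of k] n unfolding \<sigma>_def by (intro exI[of _ "(i' + (n - k mod n)) mod n"]) simp
  obtain a where H: "\<forall>x\<in>configs n d. \<forall>y\<in>configs n d.
          A x y = (if (\<forall>i<n. i \<notin> S \<longrightarrow> x i = y i)
                   then a (restrict x (S \<inter> {0..<n})) (restrict y (S \<inter> {0..<n})) else 0)"
    using A unfolding acts_only_on_def S_def by blast
  have rotx: "rot n k x i = x (\<sigma> i)" if "i < n" for x i unfolding rot_def \<sigma>_def using that by simp
  have cond: "(\<forall>i<n. i \<notin> S \<longrightarrow> rot n k x i = rot n k y i) \<longleftrightarrow> (\<forall>i<n. i \<notin> T \<longrightarrow> x i = y i)" for x y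
  proof
    assume L: "\<forall>i<n. i \<notin> S \<longrightarrow> rot n k x i = rot n k y i"
    show "\<forall>i<n. i \<notin> T \<longrightarrow> x i = y i"
    proof (intro allI impI)
      fix i' assume "i' < n" "i' \<notin> T"
      then obtain i where i: "i < n" "\<sigma> i = i'" using surj by blast
      then have "i \<notin> S" using memb \<open>i' \<notin> T\<close> by blast
      then show "x i' = y i'" using L i rotx by metis
    qed
  next
    assume R: "\<forall>i<n. i \<notin> T \<longrightarrow> x i = y i"
    show "\<forall>i<n. i \<notin> S \<longrightarrow> rot n k x i = rot n k y i"
      using R memb \<sigma>lt rotx by metis
  qed
  have res: "restrict (rot n k x) (S \<inter> {0..<n}) = restrict (rot n k (restrict x (T \<inter> {0..<n}))) (S \<inter> {0..<n})" for x
  proof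
    fix i show "restrict (rot n k x) (S \<inter> {0..<n}) i = restrict (rot n k (restrict x (T \<inter> {0..<n}))) (S \<inter> {0..<n}) i"
      using memb[of i] \<sigma>lt[of i] rotx[of i x] rotx[of i "restrict x (T \<inter> {0..<n})"] by auto
  qed
  show ?thesis
    unfolding acts_only_on_def T_def[symmetric] k_def[symmetric]
  proof (rule exI[where x="\<lambda>u v. a (restrict (rot n k u) (S \<inter> {0..<n})) (restrict (rot n k v) (S \<inter> {0..<n}))"], intro ballI)
    fix x y assume x: "x \<in> configs n d" and y: "y \<in> configs n d"
    have "trans_op n k A x y = (if (\<forall>i<n. i \<notin> S \<longrightarrow> rot n k x i = rot n k y i)
                   then a (restrict (rot n k x) (S \<inter> {0..<n})) (restrict (rot n k y) (S \<inter> {0..<n})) else 0)"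
      unfolding trans_op_def by (rule H[rule_format, OF rot_configs[OF x] rot_configs[OF y]])
    then show "trans_op n k A x y = (if \<forall>i<n. i \<notin> T \<longrightarrow> x i = y i
          then a (restrict (rot n k (restrict x (T \<inter> {0..<n}))) (S \<inter> {0..<n}))
                 (restrict (rot n k (restrict y (T \<inter> {0..<n}))) (S \<inter> {0..<n})) else 0)"
      unfolding cond res[of x] res[of y] .
  qed
qed


lemma abs_le_vnorm: "x \<in> configs n d \<Longrightarrow> cmod (\<psi> x) \<le> vnorm n d \<psi>"
proof -
  assume x: "x \<in> configs n d"
  have "(cmod (\<psi> x))\<^sup>2 \<le> (\<Sum>y\<in>configs n d. (cmod (\<psi> y))\<^sup>2)"
    by (rule member_le_sum[OF x]) auto
  then show ?thesis unfolding vnorm_def by (simp add: real_le_rsqrt)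
qed

lemma cmod_inner_self: "cmod (inner_st n d \<psi> \<psi>) = (vnorm n d \<psi>)\<^sup>2"
  unfolding inner_self norm_of_real by simp

lemma vnorm_scale: "vnorm n d (\<lambda>x. c * \<psi> x) = cmod c * vnorm n d \<psi>"
  unfolding vnorm_def by (simp add: norm_mult power_mult_distrib sum_distrib_left[symmetric] real_sqrt_mult)

lemma apply_scale: "apply_op n d A (\<lambda>x. c * \<psi> x) = (\<lambda>x. c * apply_op n d A \<psi> x)"
  unfolding apply_op_def by (simp add: sum_distrib_left mult_ac)

lemma opnorm_bdd: "bdd_above ((\<lambda>\<psi>. vnorm n d (apply_op n d A \<psi>)) ` {\<psi>. vnorm n d \<psi> \<le> 1})"
proof (rule bdd_aboveI2)
  fix \<psi> assume "\<psi> \<in> {\<psi>. vnorm n d \<psi> \<le> 1}"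
  then have v: "vnorm n d \<psi> \<le> 1" by simp
  have pt: "cmod (apply_op n d A \<psi> x) \<le> (\<Sum>y\<in>configs n d. cmod (A x y))" for x
  proof -
    have "cmod (apply_op n d A \<psi> x) \<le> (\<Sum>y\<in>configs n d. cmod (A x y) * cmod (\<psi> y))"
      unfolding apply_op_def by (rule order_trans[OF norm_sum]) (simp add: norm_mult)
    also have "\<dots> \<le> (\<Sum>y\<in>configs n d. cmod (A x y))"
    proof (rule sum_mono)
      fix y assume "y \<in> configs n d"
      then have "cmod (\<psi> y) \<le> 1" using abs_le_vnorm v by (metis order_trans)
      then show "cmod (A x y) * cmod (\<psi> y) \<le> cmod (A x y)"
        by (simp add: mult_left_le)
    qed
    finally show ?thesis .
  qed
  have "(\<Sum>x\<in>configs n d. (cmod (apply_op n d A \<psi> x))\<^sup>2) \<le> (\<Sum>x\<in>configs n d. (\<Sum>y\<in>configs n d. cmod (A x y))\<^sup>2)"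
    by (intro sum_mono power_mono pt) auto
  then show "vnorm n d (apply_op n d A \<psi>) \<le> sqrt (\<Sum>x\<in>configs n d. (\<Sum>y\<in>configs n d. cmod (A x y))\<^sup>2)"
    unfolding vnorm_def by simp
qed

lemma vnorm_zero_imp: "vnorm n d \<psi> = 0 \<Longrightarrow> x \<in> configs n d \<Longrightarrow> \<psi> x = 0"
  using abs_le_vnorm[of x n d \<psi>] by simp

lemma opnorm_bound:
  assumes "op_norm n d A \<le> M"
  shows "vnorm n d (apply_op n d A \<psi>) \<le> M * vnorm n d \<psi>"
proof (cases "vnorm n d \<psi> = 0")
  case True
  then have "apply_op n d A \<psi> x = 0" for x
    unfolding apply_op_def using vnorm_zero_imp[OF True] by simp
  then have "vnorm n d (apply_op n d A \<psi>) = 0" unfolding vnorm_def by simp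
  then show ?thesis using True by simp
next
  case False
  define c where "c = vnorm n d \<psi>"
  have c: "c > 0" using False vnorm_nonneg unfolding c_def by (metis less_eq_real_def)
  define \<phi> where "\<phi> = (\<lambda>x. complex_of_real (1 / c) * \<psi> x)"
  have v\<phi>: "vnorm n d \<phi> = 1" unfolding \<phi>_def vnorm_scale c_def[symmetric] using c by (simp add: norm_divide)
  have "vnorm n d (apply_op n d A \<phi>) \<le> op_norm n d A"
    unfolding op_norm_def by (rule cSUP_upper[OF _ opnorm_bdd]) (simp add: v\<phi>)
  also have "vnorm n d (apply_op n d A \<phi>) = vnorm n d (apply_op n d A \<psi>) / c"
    unfolding \<phi>_def apply_scale vnorm_scale using c by (simp add: norm_divide)
  finally have "vnorm n d (apply_op n d A \<psi>) \<le> c * op_norm n d A" using c by (simp add: field_simps)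
  also have "\<dots> \<le> c * M" using c assms by simp
  finally show ?thesis unfolding c_def by (simp add: mult.commute)
qed

lemma adj_bound:
  assumes M: "M \<ge> 0" and X: "\<And>\<phi>. vnorm n d (apply_op n d X \<phi>) \<le> M * vnorm n d \<phi>"
  shows "vnorm n d (apply_op n d (adj X) \<psi>) \<le> M * vnorm n d \<psi>"
proof -
  define u where "u = apply_op n d (adj X) \<psi>"
  have "(vnorm n d u)\<^sup>2 = cmod (inner_st n d u u)" by (rule cmod_inner_self[symmetric])
  also have "inner_st n d u u = inner_st n d \<psi> (apply_op n d X u)"
    unfolding u_def by (simp add: inner_adj)
  also have "cmod \<dots> \<le> vnorm n d \<psi> * vnorm n d (apply_op n d X u)" by (rule inner_CS)
  also have "\<dots> \<le> vnorm n d \<psi> * (M * vnorm n d u)" by (intro mult_left_mono X vnorm_nonneg)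
  finally have h: "(vnorm n d u)\<^sup>2 \<le> M * vnorm n d \<psi> * vnorm n d u" by (simp add: mult_ac)
  show ?thesis
  proof (cases "vnorm n d u = 0")
    case True then show ?thesis using M vnorm_nonneg u_def by (metis mult_nonneg_nonneg)
  next
    case False
    then have "vnorm n d u > 0" using vnorm_nonneg by (metis less_eq_real_def)
    then show ?thesis using h unfolding u_def by (simp add: power2_eq_square)
  qed
qed

fun Wseq :: "nat \<Rightarrow> nat \<Rightarrow> opr \<Rightarrow> nat \<Rightarrow> opr" where
  "Wseq n d G 0 = G"
| "Wseq n d G (Suc m) = mm n d (adj (Wseq n d G m)) (Wseq n d G m)"

lemma cs_chain:
  assumes v: "vnorm n d v = 1"
  shows "cmod (inner_st n d v (apply_op n d G v)) ^ (2 ^ Suc m) \<le> (vnorm n d (apply_op n d (Wseq n d G m) v))\<^sup>2"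
proof (induction m)
  case 0
  have "cmod (inner_st n d v (apply_op n d G v)) \<le> vnorm n d (apply_op n d G v)"
    using inner_CS[of n d v "apply_op n d G v"] v by simp
  then show ?case by (simp add: power_mono)
next
  case (Suc m)
  let ?W = "Wseq n d G m"
  have "(vnorm n d (apply_op n d ?W v))\<^sup>2 = cmod (inner_st n d (apply_op n d ?W v) (apply_op n d ?W v))"
    by (rule cmod_inner_self[symmetric])
  also have "inner_st n d (apply_op n d ?W v) (apply_op n d ?W v) = inner_st n d v (apply_op n d (Wseq n d G (Suc m)) v)"
    by (simp add: inner_adj apply_mm)
  also have "cmod \<dots> \<le> vnorm n d (apply_op n d (Wseq n d G (Suc m)) v)"
    using inner_CS[of n d v] v by (metis mult_1)
  finally have h: "(vnorm n d (apply_op n d ?W v))\<^sup>2 \<le> vnorm n d (apply_op n d (Wseq n d G (Suc m)) v)" .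
  have "cmod (inner_st n d v (apply_op n d G v)) ^ (2 ^ Suc (Suc m)) = (cmod (inner_st n d v (apply_op n d G v)) ^ (2 ^ Suc m))\<^sup>2"
    by (simp add: power_mult[symmetric] mult.commute)
  also have "\<dots> \<le> ((vnorm n d (apply_op n d ?W v))\<^sup>2)\<^sup>2"
    by (rule power_mono[OF Suc.IH]) simp
  also have "\<dots> \<le> (vnorm n d (apply_op n d (Wseq n d G (Suc m)) v))\<^sup>2"
    by (rule power_mono[OF h]) simp
  finally show ?case .
qed


lemma inner_diff_right: "inner_st n d \<phi> (\<lambda>y. a y - b y) = inner_st n d \<phi> a - inner_st n d \<phi> b"
  unfolding inner_st_def by (simp add: right_diff_distrib sum_subtractf)
lemma inner_diff_left: "inner_st n d (\<lambda>y. a y - b y) \<psi> = inner_st n d a \<psi> - inner_st n d b \<psi>"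
  unfolding inner_st_def by (simp add: left_diff_distrib sum_subtractf)
lemma inner_sum_right: "inner_st n d \<phi> (\<lambda>y. \<Sum>j\<in>J. f j y) = (\<Sum>j\<in>J. inner_st n d \<phi> (f j))"
  unfolding inner_st_def by (simp add: sum_distrib_left) (rule sum.swap)
lemma inner_sum_left: "inner_st n d (\<lambda>y. \<Sum>j\<in>J. f j y) \<psi> = (\<Sum>j\<in>J. inner_st n d (f j) \<psi>)"
  unfolding inner_st_def by (simp add: sum_distrib_right) (rule sum.swap)
lemma inner_scale_right: "inner_st n d \<phi> (\<lambda>y. c * f y) = c * inner_st n d \<phi> f"
  unfolding inner_st_def by (simp add: sum_distrib_left mult_ac)
lemma inner_scale_left: "inner_st n d (\<lambda>y. c * f y) \<psi> = cnj c * inner_st n d f \<psi>"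
  unfolding inner_st_def by (simp add: sum_distrib_left mult_ac)
lemma inner_swap: "inner_st n d \<psi> \<phi> = cnj (inner_st n d \<phi> \<psi>)"
  unfolding inner_st_def by (simp add: mult.commute)

lemma bessel:
  fixes D :: nat
  assumes on: "\<forall>j<D. \<forall>k<D. inner_st n d (b j) (b k) = (if j = k then 1 else 0)"
  shows "(\<Sum>j<D. (cmod (inner_st n d (b j) w))\<^sup>2) \<le> (vnorm n d w)\<^sup>2"
proof -
  define c where "c j = inner_st n d (b j) w" for j
  define s where "s = (\<lambda>y. \<Sum>j<D. c j * b j y)"
  define u where "u = (\<lambda>y. w y - s y)"
  define N where "N = (\<Sum>j<D. cnj (c j) * c j)"
  have N: "N = complex_of_real (\<Sum>j<D. (cmod (c j))\<^sup>2)"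
    unfolding N_def of_real_sum by (simp add: cnj_mult_self)
  have bs: "inner_st n d (b j) s = c j" if "j < D" for j
  proof -
    have "inner_st n d (b j) s = (\<Sum>k<D. c k * inner_st n d (b j) (b k))"
      unfolding s_def inner_sum_right inner_scale_right ..
    also have "\<dots> = (\<Sum>k<D. if k = j then c j else 0)"
      using on that by (intro sum.cong refl) auto
    also have "\<dots> = c j" using that by (subst sum.delta) auto
    finally show ?thesis .
  qed
  have ws: "inner_st n d w s = N"
    unfolding s_def inner_sum_right inner_scale_right N_def
    by (intro sum.cong refl) (simp add: c_def inner_swap[of n d w] mult.commute)
  have sw: "inner_st n d s w = N"
    unfolding s_def inner_sum_left inner_scale_left N_def c_def ..
  have ss: "inner_st n d s s = N"
  proof -
    have "inner_st n d s s = (\<Sum>j<D. cnj (c j) * inner_st n d (b j) s)"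
      unfolding s_def[of] inner_sum_left inner_scale_left by (simp add: s_def)
    also have "\<dots> = N" unfolding N_def by (intro sum.cong refl) (simp add: bs)
    finally show ?thesis .
  qed
  have "inner_st n d u u = inner_st n d w w - N"
    unfolding u_def inner_diff_left inner_diff_right
    using ws sw ss by (simp add: u_def[symmetric])
  then have "complex_of_real ((vnorm n d u)\<^sup>2) = complex_of_real ((vnorm n d w)\<^sup>2 - (\<Sum>j<D. (cmod (c j))\<^sup>2))"
    unfolding inner_self N by simp
  then have "(vnorm n d u)\<^sup>2 = (vnorm n d w)\<^sup>2 - (\<Sum>j<D. (cmod (c j))\<^sup>2)"
    using of_real_eq_iff by blast
  moreover have "(vnorm n d u)\<^sup>2 \<ge> 0" by simp
  ultimately show ?thesis unfolding c_def by simp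
qed

lemma frob_bound:
  fixes D :: nat
  assumes on: "\<forall>j<D. \<forall>k<D. inner_st n d (b j) (b k) = (if j = k then 1 else 0)"
  shows "(\<Sum>j<D. (vnorm n d (apply_op n d W (b j)))\<^sup>2) \<le> (\<Sum>x\<in>configs n d. \<Sum>y\<in>configs n d. (cmod (W x y))\<^sup>2)"
proof -
  define wx where "wx x = (\<lambda>y. cnj (W x y))" for x
  have ap: "cmod (apply_op n d W (b j) x) = cmod (inner_st n d (b j) (wx x))" for j x
  proof -
    have "apply_op n d W (b j) x = inner_st n d (wx x) (b j)"
      unfolding apply_op_def inner_st_def wx_def by simp
    then show ?thesis by (simp add: inner_swap[of n d "wx x"])
  qed
  have "(\<Sum>j<D. (vnorm n d (apply_op n d W (b j)))\<^sup>2) = (\<Sum>j<D. \<Sum>x\<in>configs n d. (cmod (inner_st n d (b j) (wx x)))\<^sup>2)"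
    unfolding vnorm_sq ap ..
  also have "\<dots> = (\<Sum>x\<in>configs n d. \<Sum>j<D. (cmod (inner_st n d (b j) (wx x)))\<^sup>2)" by (rule sum.swap)
  also have "\<dots> \<le> (\<Sum>x\<in>configs n d. (vnorm n d (wx x))\<^sup>2)"
    by (intro sum_mono bessel[OF on])
  also have "\<dots> = (\<Sum>x\<in>configs n d. \<Sum>y\<in>configs n d. (cmod (W x y))\<^sup>2)"
    unfolding vnorm_sq wx_def by simp
  finally show ?thesis .
qed

lemma Wseq_word: "\<exists>\<beta>. Wseq n d G m = mp n d (\<lambda>i. if \<beta> i then adj G else G) (2 ^ m - 1)"
proof (induction m)
  case 0
  show ?case by (rule exI[of _ "\<lambda>_. False"]) simp
next
  case (Suc m)
  then obtain \<beta> where b: "Wseq n d G m = mp n d (\<lambda>i. if \<beta> i then adj G else G) (2 ^ m - 1)" by blast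
  define k where "k = (2::nat) ^ m - 1"
  define \<beta>' where "\<beta>' i = (if i \<le> k then \<not> \<beta> (k - i) else \<beta> (i - Suc k))" for i
  have kk: "k + Suc k = 2 ^ Suc m - 1" unfolding k_def by (simp add: Suc_diff_le)
  have "Wseq n d G (Suc m) = mm n d (mp n d (\<lambda>i. adj (if \<beta> (k - i) then adj G else G)) k) (mp n d (\<lambda>i. if \<beta> i then adj G else G) k)"
    using b unfolding k_def by (simp add: adj_mp)
  also have "\<dots> = mp n d (\<lambda>i. if \<beta>' i then adj G else G) (k + Suc k)"
    unfolding mp_concat \<beta>'_def by (intro mp_cong) auto
  finally show ?case unfolding kk by blast
qed


lemma num_bound:
  fixes m f q :: nat
  assumes "f \<le> q" "f \<le> m"
  shows "m ^ f * f ^ (2 * q - f) \<le> (m * q) ^ q"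
proof -
  have e: "2 * q - f = f + (q - f) + (q - f)" using assms by simp
  have "m ^ f * f ^ (2 * q - f) = (m ^ f * f ^ f) * (f ^ (q - f) * f ^ (q - f))"
    unfolding e power_add by (simp only: mult_ac)
  also have "\<dots> = (m * f) ^ f * (f * f) ^ (q - f)"
    by (simp only: power_mult_distrib)
  also have "\<dots> \<le> (m * f) ^ f * (m * f) ^ (q - f)"
    using assms by (intro mult_le_mono2 power_mono) auto
  also have "\<dots> = (m * f) ^ (f + (q - f))" by (simp only: power_add)
  also have "\<dots> = (m * f) ^ q" using assms by simp
  also have "\<dots> \<le> (m * q) ^ q" using assms by (intro power_mono) auto
  finally show ?thesis .
qed

definition firsts :: "(nat \<Rightarrow> 'a) \<Rightarrow> nat \<Rightarrow> nat set" where
  "firsts \<tau> p = {i. i < p \<and> (\<forall>j<i. \<tau> j \<noteq> \<tau> i)}"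

definition code :: "(nat \<Rightarrow> 'a) \<Rightarrow> nat \<Rightarrow> nat \<Rightarrow> 'a + nat" where
  "code \<tau> p = (\<lambda>i\<in>{0..<p}. if i \<in> firsts \<tau> p then Inl (\<tau> i) else Inr (LEAST j. \<tau> j = \<tau> i))"

lemma least_in_firsts:
  assumes "i < p"
  shows "(LEAST j. \<tau> j = \<tau> i) \<in> firsts \<tau> p" and "\<tau> (LEAST j. \<tau> j = \<tau> i) = \<tau> i"
    and "(LEAST j. \<tau> j = \<tau> i) \<le> i"
proof -
  show le: "(LEAST j. \<tau> j = \<tau> i) \<le> i" by (rule Least_le) simp
  show eq: "\<tau> (LEAST j. \<tau> j = \<tau> i) = \<tau> i" by (rule LeastI[of _ i]) simp
  show "(LEAST j. \<tau> j = \<tau> i) \<in> firsts \<tau> p"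
  proof -
    have "\<tau> j \<noteq> \<tau> (LEAST j. \<tau> j = \<tau> i)" if "j < (LEAST j. \<tau> j = \<tau> i)" for j
      using not_less_Least[OF that] eq by simp
    then show ?thesis unfolding firsts_def using le assms by simp
  qed
qed

lemma count_valid:
  fixes K :: "'a set" and q :: nat
  assumes fin: "finite K"
  shows "card {\<tau> \<in> {0..<2*q} \<rightarrow>\<^sub>E K. \<forall>i<2*q. \<exists>j<2*q. j \<noteq> i \<and> \<tau> j = \<tau> i} \<le> 4 ^ q * (card K * q) ^ q"
proof -
  define p where "p = 2 * q"
  define V where "V = {\<tau> \<in> {0..<p} \<rightarrow>\<^sub>E K. \<forall>i<p. \<exists>j<p. j \<noteq> i \<and> \<tau> j = \<tau> i}"
  define m where "m = card K"
  define B where "B F = (\<lambda>i. if i \<in> F then Inl ` K else Inr ` F :: ('a + nat) set)" for F :: "nat set"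
  define Fam where "Fam = {F. F \<subseteq> {0..<p} \<and> card F \<le> q \<and> card F \<le> m}"
  have injF: "inj_on \<tau> (firsts \<tau> p)" for \<tau> :: "nat \<Rightarrow> 'a"
  proof (rule inj_onI)
    fix i i' assume "i \<in> firsts \<tau> p" "i' \<in> firsts \<tau> p" "\<tau> i = \<tau> i'"
    then show "i = i'" unfolding firsts_def by (cases i i' rule: linorder_cases) auto
  qed
  have fam: "firsts \<tau> p \<in> Fam" if \<tau>: "\<tau> \<in> V" for \<tau>
  proof -
    let ?F = "firsts \<tau> p"
    have sub: "?F \<subseteq> {0..<p}" unfolding firsts_def by auto
    have "\<exists>j<p. j \<noteq> i \<and> \<tau> j = \<tau> i" if "i \<in> ?F" for i
      using \<tau> that unfolding V_def firsts_def by auto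
    then have "\<forall>i\<in>?F. \<exists>j. j < p \<and> j \<noteq> i \<and> \<tau> j = \<tau> i" by blast
    from bchoice[OF this] obtain g where g0: "\<forall>i\<in>?F. g i < p \<and> g i \<noteq> i \<and> \<tau> (g i) = \<tau> i" by blast
    then have g: "\<And>i. i \<in> ?F \<Longrightarrow> g i < p \<and> g i \<noteq> i \<and> \<tau> (g i) = \<tau> i" by blast
    have gout: "g i \<in> {0..<p} - ?F" if "i \<in> ?F" for i
    proof -
      have "i < g i"
      proof (rule ccontr)
        assume "\<not> i < g i"
        then have "g i < i" using g[OF that] by auto
        then show False using g[OF that] that unfolding firsts_def by auto
      qed
      then show ?thesis using g[OF that] unfolding firsts_def by auto
    qed
    have "inj_on g ?F"
    proof (rule inj_onI)
      fix i i' assume "i \<in> ?F" "i' \<in> ?F" "g i = g i'"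
      then have "\<tau> i = \<tau> i'" using g[OF \<open>i \<in> ?F\<close>] g[OF \<open>i' \<in> ?F\<close>] by simp
      then show "i = i'" by (rule inj_onD[OF injF[of \<tau>]]) (fact+)
    qed
    then have "card ?F \<le> card ({0..<p} - ?F)"
      using gout by (intro card_inj_on_le) auto
    also have "\<dots> = p - card ?F" using sub by (simp add: card_Diff_subset finite_subset)
    finally have c1: "card ?F \<le> q" unfolding p_def by simp
    have "card ?F = card (\<tau> ` ?F)" using injF by (simp add: card_image)
    also have "\<dots> \<le> m" unfolding m_def
      using \<tau> sub fin unfolding V_def by (intro card_mono) (auto simp: PiE_iff)
    finally show ?thesis using c1 sub unfolding Fam_def by auto
  qed
  have codeB: "code \<tau> p \<in> Pi\<^sub>E {0..<p} (B (firsts \<tau> p))" if \<tau>: "\<tau> \<in> V" for \<tau>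
    unfolding code_def B_def
    using \<tau> least_in_firsts[of _ p \<tau>] unfolding V_def by (auto simp: PiE_iff)
  have inj: "inj_on (\<lambda>\<tau>. code \<tau> p) V"
  proof (rule inj_onI)
    fix \<tau> \<tau>' assume t: "\<tau> \<in> V" and t': "\<tau>' \<in> V" and c: "code \<tau> p = code \<tau>' p"
    have cc: "code \<tau> p i = code \<tau>' p i" for i using c by simp
    have Feq: "i \<in> firsts \<tau> p \<longleftrightarrow> i \<in> firsts \<tau>' p" if "i < p" for i
      using cc[of i] that unfolding code_def by (auto split: if_splits)
    have inF: "\<tau> i = \<tau>' i" if "i \<in> firsts \<tau> p" for i
      using cc[of i] that Feq[of i] unfolding code_def firsts_def by auto
    show "\<tau> = \<tau>'"
    proof
      fix i show "\<tau> i = \<tau>' i"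
      proof (cases "i < p")
        case False
        then show ?thesis using t t' unfolding V_def by (auto simp: PiE_iff extensional_def)
      next
        case True
        show ?thesis
        proof (cases "i \<in> firsts \<tau> p")
          case True then show ?thesis by (rule inF)
        next
          case False
          then have nf': "i \<notin> firsts \<tau>' p" using Feq \<open>i < p\<close> by blast
          have L: "(LEAST j. \<tau> j = \<tau> i) = (LEAST j. \<tau>' j = \<tau>' i)"
            using cc[of i] False nf' \<open>i < p\<close> unfolding code_def by simp
          have "\<tau> i = \<tau> (LEAST j. \<tau> j = \<tau> i)" using least_in_firsts(2)[OF \<open>i < p\<close>, of \<tau>] by simp
          also have "\<dots> = \<tau>' (LEAST j. \<tau> j = \<tau> i)" by (rule inF[OF least_in_firsts(1)[OF \<open>i < p\<close>]])
          also have "\<dots> = \<tau>' i" unfolding L by (rule least_in_firsts(2)[OF \<open>i < p\<close>])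
          finally show ?thesis .
        qed
      qed
    qed
  qed
  have "card V = card ((\<lambda>\<tau>. code \<tau> p) ` V)" using inj by (simp add: card_image)
  also have "\<dots> \<le> card (\<Union>F\<in>Fam. Pi\<^sub>E {0..<p} (B F))"
  proof (rule card_mono)
    show "finite (\<Union>F\<in>Fam. Pi\<^sub>E {0..<p} (B F))"
    proof (rule finite_UN_I)
      show "finite Fam" unfolding Fam_def by (rule finite_subset[of _ "Pow {0..<p}"]) auto
      show "finite (Pi\<^sub>E {0..<p} (B F))" if "F \<in> Fam" for F
        using that fin unfolding B_def Fam_def by (intro finite_PiE) (auto intro: finite_subset)
    qed
    show "(\<lambda>\<tau>. code \<tau> p) ` V \<subseteq> (\<Union>F\<in>Fam. Pi\<^sub>E {0..<p} (B F))"
      using fam codeB by blast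
  qed
  also have "\<dots> \<le> (\<Sum>F\<in>Fam. card (Pi\<^sub>E {0..<p} (B F)))"
    by (rule card_UN_le) (unfold Fam_def, rule finite_subset[of _ "Pow {0..<p}"], auto)
  also have "\<dots> \<le> (\<Sum>F\<in>Fam. (m * q) ^ q)"
  proof (rule sum_mono)
    fix F assume F: "F \<in> Fam"
    then have sub: "F \<subseteq> {0..<p}" unfolding Fam_def by auto
    have "card (Pi\<^sub>E {0..<p} (B F)) = (\<Prod>i\<in>{0..<p}. card (B F i))" by (simp add: card_PiE)
    also have "\<dots> = (\<Prod>i\<in>{0..<p}. if i \<in> F then m else card F)"
      unfolding B_def m_def by (intro prod.cong refl) (auto simp: card_image)
    also have "\<dots> = m ^ card F * card F ^ (p - card F)"
    proof -
      have s1: "{0..<p} \<inter> {x. x \<in> F} = F" "{0..<p} \<inter> - {x. x \<in> F} = {0..<p} - F" using sub by auto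
      have "(\<Prod>i\<in>{0..<p}. if i \<in> F then m else card F) = (\<Prod>i\<in>{0..<p} \<inter> {x. x \<in> F}. m) * (\<Prod>i\<in>{0..<p} \<inter> - {x. x \<in> F}. card F)"
        by (rule prod.If_cases) simp
      also have "\<dots> = m ^ card F * card F ^ (p - card F)"
        unfolding s1 using sub by (simp add: card_Diff_subset finite_subset)
      finally show ?thesis .
    qed
    also have "\<dots> \<le> (m * q) ^ q"
      using F num_bound[of "card F" q m] unfolding Fam_def p_def by auto
    finally show "card (Pi\<^sub>E {0..<p} (B F)) \<le> (m * q) ^ q" .
  qed
  also have "\<dots> = card Fam * (m * q) ^ q" by simp
  also have "\<dots> \<le> 2 ^ p * (m * q) ^ q"
  proof -
    have "card Fam \<le> card (Pow {0..<p})" unfolding Fam_def by (intro card_mono) auto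
    also have "\<dots> = 2 ^ p" by (simp add: card_Pow)
    finally show ?thesis by simp
  qed
  also have "\<dots> = 4 ^ q * (m * q) ^ q" unfolding p_def by (simp add: power_mult)
  finally show ?thesis unfolding V_def p_def m_def .
qed


lemma trace_bound:
  assumes "\<And>\<psi>. vnorm n d (apply_op n d Z \<psi>) \<le> B * vnorm n d \<psi>"
  shows "cmod (trace_op n d Z) \<le> real (d ^ n) * B"
proof -
  have "cmod (Z x x) \<le> B" if x: "x \<in> configs n d" for x
  proof -
    define e where "e = (\<lambda>y. if y = x then (1::complex) else 0)"
    have "apply_op n d Z e x = Z x x" unfolding apply_op_def e_def using x
      by (simp add: if_distrib cong: if_cong)
    moreover have "vnorm n d e = 1"
    proof -
      have "(\<Sum>y\<in>configs n d. (cmod (e y))\<^sup>2) = (\<Sum>y\<in>configs n d. if y = x then 1 else 0)"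
        unfolding e_def by (intro sum.cong refl) auto
      also have "\<dots> = 1" using x by simp
      finally show ?thesis unfolding vnorm_def by simp
    qed
    ultimately show ?thesis using abs_le_vnorm[OF x, of "apply_op n d Z e"] assms[of e] by simp
  qed
  then have "cmod (trace_op n d Z) \<le> (\<Sum>x\<in>configs n d. B)"
    unfolding trace_op_def by (intro order_trans[OF norm_sum] sum_mono) auto
  also have "\<dots> = real (d ^ n) * B" by (simp add: card_configs)
  finally show ?thesis .
qed

lemma adj_opsum: "adj (opsum K X) = opsum K (\<lambda>t. adj (X t))"
  unfolding adj_def opsum_def by simp

lemma trace_opsum: "trace_op n d (opsum K F) = (\<Sum>t\<in>K. trace_op n d (F t))"
  unfolding trace_op_def opsum_def by (rule sum.swap)

lemma rot_ne: "i \<le> k \<Longrightarrow> 0 < l \<Longrightarrow> l \<le> k \<Longrightarrow> (l + i) mod Suc k \<noteq> i"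
proof (cases "l + i < Suc k")
  case True
  assume "0 < l"
  then show ?thesis using True by simp
next
  case False
  assume "i \<le> k" "0 < l" "l \<le> k"
  then have "(l + i) mod Suc k = (l + i - Suc k) mod Suc k" using False by (simp add: le_mod_geq)
  also have "\<dots> = l + i - Suc k" using \<open>i \<le> k\<close> \<open>l \<le> k\<close> by simp
  finally show ?thesis using \<open>l \<le> k\<close> False by linarith
qed

lemma word_trace_bound:
  fixes K :: "nat set" and X :: "nat \<Rightarrow> opr" and Sp :: "nat \<Rightarrow> nat set"
  assumes d: "d > 0" and fin: "finite K" and M: "M \<ge> 0" and k: "k \<ge> 1"
    and aoo: "\<forall>t\<in>K. acts_only_on n d (Sp t) (X t)"
    and tr: "\<forall>t\<in>K. trace_op n d (X t) = 0"
    and nb: "\<forall>t\<in>K. \<forall>\<psi>. vnorm n d (apply_op n d (X t) \<psi>) \<le> M * vnorm n d \<psi>"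
    and disj: "\<forall>t\<in>K. \<forall>t'\<in>K. t \<noteq> t' \<longrightarrow> Sp t \<inter> Sp t' = {}"
  shows "cmod (trace_op n d (mp n d (\<lambda>i. if \<beta> i then adj (opsum K X) else opsum K X) k))
    \<le> real (card {\<tau> \<in> {0..<Suc k} \<rightarrow>\<^sub>E K. \<forall>i<Suc k. \<exists>j<Suc k. j \<noteq> i \<and> \<tau> j = \<tau> i}) * (real (d ^ n) * M ^ Suc k)"
proof -
  define Y where "Y i t = (if \<beta> i then adj (X t) else X t)" for i t
  define P where "P = {0..<Suc k} \<rightarrow>\<^sub>E K"
  define V where "V = {\<tau> \<in> P. \<forall>i<Suc k. \<exists>j<Suc k. j \<noteq> i \<and> \<tau> j = \<tau> i}"
  define f where "f \<tau> = trace_op n d (mp n d (\<lambda>i. Y i (\<tau> i)) k)" for \<tau>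
  have Pe: "{0..k} = {0..<Suc k}" by auto
  have e1: "(\<lambda>i. if \<beta> i then adj (opsum K X) else opsum K X) = (\<lambda>i. opsum K (Y i))"
    unfolding Y_def adj_opsum by (auto simp: fun_eq_iff opsum_def)
  have "trace_op n d (mp n d (\<lambda>i. if \<beta> i then adj (opsum K X) else opsum K X) k) = (\<Sum>\<tau>\<in>P. f \<tau>)"
    unfolding e1 mp_expand trace_opsum f_def P_def Pe ..
  also have "\<dots> = (\<Sum>\<tau>\<in>V. f \<tau>)"
  proof (rule sum.mono_neutral_right)
    show "finite P" unfolding P_def using fin by (simp add: finite_PiE)
    show "V \<subseteq> P" unfolding V_def by auto
    show "\<forall>\<tau>\<in>P - V. f \<tau> = 0"
    proof
      fix \<tau> assume "\<tau> \<in> P - V"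
      then have \<tau>P: "\<tau> \<in> P" and "\<not> (\<forall>i<Suc k. \<exists>j<Suc k. j \<noteq> i \<and> \<tau> j = \<tau> i)" unfolding V_def by auto
      then obtain i where i: "i \<le> k" and iso: "\<And>j. j \<le> k \<Longrightarrow> j \<noteq> i \<Longrightarrow> \<tau> j \<noteq> \<tau> i" by (auto simp: less_Suc_eq_le)
      have \<tau>K: "\<tau> j \<in> K" if "j \<le> k" for j using \<tau>P that unfolding P_def by (auto simp: PiE_iff)
      define F where "F l = Y l (\<tau> l)" for l
      define F' where "F' l = F ((l + i) mod Suc k)" for l
      obtain k' where k': "k = Suc k'" using k by (cases k) auto
      have "f \<tau> = trace_op n d (mp n d F' k)"
        unfolding f_def F'_def F_def by (rule trace_rot)
      also have "mp n d F' k = mm n d (F' 0) (mp n d (\<lambda>l. F' (Suc l)) k')"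
        unfolding k' by (rule mp_left)
      also have "trace_op n d \<dots> = 0"
      proof (rule trace_vanish[OF d])
        have F0: "F' 0 = Y i (\<tau> i)" unfolding F'_def F_def using i by simp
        show "acts_only_on n d (Sp (\<tau> i)) (F' 0)"
          unfolding F0 Y_def using aoo \<tau>K[OF i] by (auto intro: aoo_adj)
        show "trace_op n d (F' 0) = 0"
          unfolding F0 Y_def using tr \<tau>K[OF i] by (auto simp: trace_adj)
        show "triv n d (Sp (\<tau> i)) (mp n d (\<lambda>l. F' (Suc l)) k')"
        proof (rule triv_mp)
          fix l assume l: "l \<le> k'"
          define j where "j = (Suc l + i) mod Suc k"
          have jk: "j \<le> k" unfolding j_def using less_Suc_eq_le by auto
          have ji: "j \<noteq> i" unfolding j_def using rot_ne[OF i, of "Suc l"] l k' by simp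
          have dj: "Sp (\<tau> i) \<inter> Sp (\<tau> j) = {}"
            using disj \<tau>K[OF i] \<tau>K[OF jk] iso[OF jk ji] by metis
          have "acts_only_on n d (Sp (\<tau> j)) (Y j (\<tau> j))"
            unfolding Y_def using aoo \<tau>K[OF jk] by (auto intro: aoo_adj)
          then have "triv n d (Sp (\<tau> i)) (Y j (\<tau> j))" using dj by (rule aoo_triv)
          then show "triv n d (Sp (\<tau> i)) (F' (Suc l))" unfolding F'_def F_def j_def by simp
        qed
      qed
      finally show "f \<tau> = 0" .
    qed
  qed
  finally have "cmod (trace_op n d (mp n d (\<lambda>i. if \<beta> i then adj (opsum K X) else opsum K X) k)) \<le> (\<Sum>\<tau>\<in>V. cmod (f \<tau>))"
    by (simp add: norm_sum)
  also have "\<dots> \<le> (\<Sum>\<tau>\<in>V. real (d ^ n) * M ^ Suc k)"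
  proof (rule sum_mono)
    fix \<tau> assume "\<tau> \<in> V"
    then have \<tau>K: "\<tau> j \<in> K" if "j \<le> k" for j using that unfolding V_def P_def by (auto simp: PiE_iff)
    show "cmod (f \<tau>) \<le> real (d ^ n) * M ^ Suc k"
      unfolding f_def
    proof (rule trace_bound)
      fix \<psi>
      show "vnorm n d (apply_op n d (mp n d (\<lambda>i. Y i (\<tau> i)) k) \<psi>) \<le> M ^ Suc k * vnorm n d \<psi>"
      proof (rule vnorm_apply_mp[OF M])
        fix i \<phi> assume "i \<le> k"
        then show "vnorm n d (apply_op n d (Y i (\<tau> i)) \<phi>) \<le> M * vnorm n d \<phi>"
          unfolding Y_def using nb \<tau>K adj_bound[OF M] by auto
      qed
    qed
  qed
  also have "\<dots> = real (card V) * (real (d ^ n) * M ^ Suc k)" by simp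
  finally show ?thesis unfolding V_def P_def .
qed


lemma vnorm_one: "inner_st n d v v = 1 \<Longrightarrow> vnorm n d v = 1"
proof -
  assume h: "inner_st n d v v = 1"
  have "complex_of_real ((vnorm n d v)\<^sup>2) = 1" by (simp only: inner_self[symmetric] h)
  then have "(vnorm n d v)\<^sup>2 = 1" by (simp only: of_real_eq_1_iff)
  then have "vnorm n d v = 1 \<or> vnorm n d v = - 1" by (simp add: power2_eq_1_iff)
  then show ?thesis using vnorm_nonneg[of n d v] by linarith
qed

lemma group_moment:
  fixes K :: "nat set" and X :: "nat \<Rightarrow> opr" and Sp :: "nat \<Rightarrow> nat set" and D :: nat
  assumes d: "d > 0" and fin: "finite K" and M: "M \<ge> 0"
    and aoo: "\<forall>t\<in>K. acts_only_on n d (Sp t) (X t)"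
    and tr: "\<forall>t\<in>K. trace_op n d (X t) = 0"
    and nb: "\<forall>t\<in>K. \<forall>\<psi>. vnorm n d (apply_op n d (X t) \<psi>) \<le> M * vnorm n d \<psi>"
    and disj: "\<forall>t\<in>K. \<forall>t'\<in>K. t \<noteq> t' \<longrightarrow> Sp t \<inter> Sp t' = {}"
    and on: "\<forall>j<D. \<forall>k<D. inner_st n d (b j) (b k) = (if j = k then 1 else 0)"
  shows "(\<Sum>j<D. cmod (inner_st n d (b j) (apply_op n d (opsum K X) (b j))) ^ (2 * 2 ^ m))
     \<le> real (4 ^ (2 ^ m) * (card K * 2 ^ m) ^ (2 ^ m)) * (real (d ^ n) * M ^ (2 * 2 ^ m))"
proof -
  let ?G = "opsum K X"
  let ?W = "Wseq n d ?G m"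
  define k where "k = (2::nat) ^ Suc m - 1"
  have "(2::nat) ^ m > 0" by simp
  then have k1: "k \<ge> 1" unfolding k_def power_Suc by linarith
  have Sk: "Suc k = 2 * 2 ^ m" unfolding k_def by simp
  have "(\<Sum>j<D. cmod (inner_st n d (b j) (apply_op n d ?G (b j))) ^ (2 * 2 ^ m))
      \<le> (\<Sum>j<D. (vnorm n d (apply_op n d ?W (b j)))\<^sup>2)"
  proof (rule sum_mono)
    fix j assume "j \<in> {..<D}"
    then have "vnorm n d (b j) = 1" using on vnorm_one by simp
    from cs_chain[OF this, of ?G m] show "cmod (inner_st n d (b j) (apply_op n d ?G (b j))) ^ (2 * 2 ^ m)
      \<le> (vnorm n d (apply_op n d ?W (b j)))\<^sup>2" by simp
  qed
  also have "\<dots> \<le> (\<Sum>x\<in>configs n d. \<Sum>y\<in>configs n d. (cmod (?W x y))\<^sup>2)"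
    by (rule frob_bound[OF on])
  also have "\<dots> = Re (trace_op n d (Wseq n d ?G (Suc m)))"
    by (simp add: trace_adj_mm_self)
  also have "\<dots> \<le> cmod (trace_op n d (Wseq n d ?G (Suc m)))" by (rule complex_Re_le_cmod)
  also obtain \<beta> where "Wseq n d ?G (Suc m) = mp n d (\<lambda>i. if \<beta> i then adj ?G else ?G) k"
    using Wseq_word unfolding k_def by blast
  also have "cmod (trace_op n d (mp n d (\<lambda>i. if \<beta> i then adj ?G else ?G) k))
     \<le> real (card {\<tau> \<in> {0..<Suc k} \<rightarrow>\<^sub>E K. \<forall>i<Suc k. \<exists>j<Suc k. j \<noteq> i \<and> \<tau> j = \<tau> i}) * (real (d ^ n) * M ^ Suc k)"
    by (rule word_trace_bound[OF d fin M k1 aoo tr nb disj])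
  also have "\<dots> \<le> real (4 ^ (2 ^ m) * (card K * 2 ^ m) ^ (2 ^ m)) * (real (d ^ n) * M ^ (2 * 2 ^ m))"
    unfolding Sk using count_valid[OF fin, of "2 ^ m"] M
    by (intro mult_right_mono) (simp_all only: of_nat_le_iff, auto)
  finally show ?thesis .
qed

lemma markov_count:
  fixes D :: nat and a :: "nat \<Rightarrow> real"
  assumes "lam > 0" and "\<And>j. a j \<ge> 0"
  shows "real (card {j. j < D \<and> a j \<ge> lam}) * lam ^ p \<le> (\<Sum>j<D. a j ^ p)"
proof -
  let ?S = "{j. j < D \<and> a j \<ge> lam}"
  have "real (card ?S) * lam ^ p = (\<Sum>j\<in>?S. lam ^ p)" by simp
  also have "\<dots> \<le> (\<Sum>j\<in>?S. a j ^ p)"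
    using assms by (intro sum_mono power_mono) auto
  also have "\<dots> \<le> (\<Sum>j<D. a j ^ p)"
    using assms by (intro sum_mono2) auto
  finally show ?thesis .
qed

lemma exists_pow2:
  fixes x :: real
  assumes "x \<ge> 1"
  shows "\<exists>m. 2 ^ m \<le> x \<and> x < 2 ^ Suc m"
proof -
  obtain k where k: "x < 2 ^ k" using real_arch_pow[of 2 x] by auto
  define m where "m = (LEAST m. x < 2 ^ Suc m)"
  have "(2::real) ^ k \<le> 2 ^ Suc k" by simp
  then have ex: "x < 2 ^ Suc k" using k by linarith
  have m1: "x < 2 ^ Suc m" unfolding m_def by (rule LeastI[where P="\<lambda>m. x < 2 ^ Suc m", OF ex])
  have "2 ^ m \<le> x"
  proof (cases m)
    case 0 then show ?thesis using assms by simp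
  next
    case (Suc m')
    then have "m' < (LEAST m. x < 2 ^ Suc m)" unfolding m_def by simp
    then have "\<not> x < 2 ^ Suc m'" by (rule not_less_Least)
    then show ?thesis using Suc by simp
  qed
  then show ?thesis using m1 by blast
qed

lemma apply_opsum: "apply_op n d (opsum K X) v = (\<lambda>x. \<Sum>t\<in>K. apply_op n d (X t) v x)"
  unfolding apply_op_def opsum_def by (rule ext) (simp add: sum_distrib_right, rule sum.swap)

lemma inner_apply_opsum: "inner_st n d v (apply_op n d (opsum K X) v) = (\<Sum>t\<in>K. inner_st n d v (apply_op n d (X t) v))"
  unfolding apply_opsum by (rule inner_sum_right)


lemma pg_arith:
  fixes Cg Dr n \<delta> M R Xr :: real and q :: nat
  assumes Cg: "Cg \<ge> 0" and Dr: "Dr > 0" and n: "n > 0" and \<delta>: "\<delta> > 0" and M: "M > 0" and R: "R > 0"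
    and h: "Cg * (n * \<delta> / R) ^ (2 * q) \<le> 4 ^ q * (n * q) ^ q * Dr * M ^ (2 * q)"
    and X: "Xr = n * \<delta>\<^sup>2 / (4 * exp 1 * M\<^sup>2 * R\<^sup>2)" and q1: "q \<le> Xr" and q2: "Xr < 2 * q"
  shows "Cg \<le> Dr * exp (- (n * \<delta>\<^sup>2 / (8 * exp 1 * M\<^sup>2 * R\<^sup>2)))"
proof -
  define lam where "lam = n * \<delta> / R"
  have lam: "lam > 0" unfolding lam_def using n \<delta> R by simp
  define \<rho> where "\<rho> = 4 * n * q * M\<^sup>2 / lam\<^sup>2"
  have Xpos: "Xr > 0" unfolding X using n \<delta> M R by simp
  have e1: "(n * \<delta> / R) ^ (2 * q) = (lam\<^sup>2) ^ q" unfolding lam_def by (simp add: power_mult)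
  have m2: "M ^ (2 * q) = (M\<^sup>2) ^ q" by (rule power_mult)
  have "4 ^ q * (n * q) ^ q * Dr * M ^ (2 * q) = Dr * (4 ^ q * (n * q) ^ q * (M\<^sup>2) ^ q)"
    unfolding m2 by (simp only: mult_ac)
  also have "\<dots> = Dr * (4 * n * q * M\<^sup>2) ^ q" by (simp only: power_mult_distrib mult.assoc)
  finally have e2: "4 ^ q * (n * q) ^ q * Dr * M ^ (2 * q) = Dr * (4 * n * q * M\<^sup>2) ^ q" .
  have "Cg * (lam\<^sup>2) ^ q \<le> Dr * (4 * n * q * M\<^sup>2) ^ q" using h e1 e2 by simp
  then have "Cg \<le> Dr * (4 * n * q * M\<^sup>2) ^ q / (lam\<^sup>2) ^ q" using lam by (simp add: field_simps)
  also have "\<dots> = Dr * \<rho> ^ q" unfolding \<rho>_def by (simp add: power_divide)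
  also have "\<rho> = q / (exp 1 * Xr)"
    unfolding \<rho>_def X lam_def using n \<delta> M R by (simp add: field_simps power2_eq_square)
  also have "(q / (exp 1 * Xr)) ^ q \<le> (1 / exp 1) ^ q"
  proof (rule power_mono)
    show "q / (exp 1 * Xr) \<le> 1 / exp 1" using q1 Xpos by (simp add: field_simps)
    show "0 \<le> q / (exp 1 * Xr)" using Xpos by simp
  qed
  then have "Dr * (q / (exp 1 * Xr)) ^ q \<le> Dr * (1 / exp 1) ^ q" using Dr by simp
  also have "(1 / exp 1) ^ q = exp (- real q)"
  proof -
    have "exp (- real q) = exp (real q * (-1))" by simp
    also have "\<dots> = exp (-1) ^ q" by (rule exp_of_nat_mult)
    also have "exp (-1) = 1 / exp (1::real)" by (simp add: exp_minus inverse_eq_divide)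
    finally show ?thesis by simp
  qed
  also have "exp (- real q) \<le> exp (- (Xr / 2))" using q2 by simp
  also have "Xr / 2 = n * \<delta>\<^sup>2 / (8 * exp 1 * M\<^sup>2 * R\<^sup>2)" unfolding X by simp
  finally show ?thesis using Dr by simp
qed


definition grp :: "nat \<Rightarrow> nat \<Rightarrow> nat \<Rightarrow> nat" where
  "grp n r t = (if t + r \<le> n then t mod r else r + (t + r - n))"

lemma grp_lt: "r \<ge> 1 \<Longrightarrow> t < n \<Longrightarrow> grp n r t < 2 * r"
  unfolding grp_def by (auto intro: less_le_trans[OF mod_less_divisor])

lemma mod_gap: "(t::nat) < t' \<Longrightarrow> t mod r = t' mod r \<Longrightarrow> r > 0 \<Longrightarrow> t + r \<le> t'"
proof -
  assume "t < t'" "t mod r = t' mod r" "r > 0"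
  then have "r dvd t' - t" using mod_eq_dvd_iff_nat[of t t' r] by auto
  then have "r \<le> t' - t" using \<open>t < t'\<close> by (intro dvd_imp_le) auto
  then show ?thesis using \<open>t < t'\<close> by simp
qed

lemma disj_aux:
  fixes t t' r n :: nat
  assumes "t + r \<le> n" "t' + r \<le> n" "t + r \<le> t'"
  shows "{(t + j) mod n | j. j < r} \<inter> {(t' + j) mod n | j. j < r} = {}"
proof (rule ccontr)
  assume "\<not> ?thesis"
  then obtain j j' where j: "j < r" "j' < r" "(t + j) mod n = (t' + j') mod n" by blast
  have "(t + j) mod n = t + j" using j(1) assms(1) by simp
  moreover have "(t' + j') mod n = t' + j'" using j(2) assms(2) by simp
  ultimately show False using j assms by simp
qed

lemma grp_disj:
  assumes r: "r \<ge> 1" and t: "t < n" and t': "t' < n" and g: "grp n r t = grp n r t'" and ne: "t \<noteq> t'"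
  shows "{(t + j) mod n | j. j < r} \<inter> {(t' + j) mod n | j. j < r} = {}"
proof (cases "t + r \<le> n")
  case True
  note T = True
  show ?thesis
  proof (cases "t' + r \<le> n")
    case True
    then have m: "t mod r = t' mod r" using g T unfolding grp_def by simp
    show ?thesis
    proof (cases "t < t'")
      case True
      then show ?thesis using disj_aux[OF T \<open>t' + r \<le> n\<close> mod_gap[OF True m]] r by simp
    next
      case False
      then have "t' < t" using ne by simp
      then show ?thesis using disj_aux[OF \<open>t' + r \<le> n\<close> T mod_gap[OF \<open>t' < t\<close> m[symmetric]]] r by blast
    qed
  next
    case False
    then have "t mod r = r + (t' + r - n)" using g T unfolding grp_def by simp
    moreover have "t mod r < r" using r by simp
    ultimately show ?thesis by simp
  qed
next
  case False
  note F = False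
  show ?thesis
  proof (cases "t' + r \<le> n")
    case True
    then have "t' mod r = r + (t + r - n)" using g F unfolding grp_def by simp
    moreover have "t' mod r < r" using r by simp
    ultimately show ?thesis by simp
  next
    case False
    then have "t = t'" using g F t t' unfolding grp_def by simp
    then show ?thesis using ne by simp
  qed
qed


lemma main_bound:
  fixes d r n :: nat and M \<delta> :: real and b :: "nat \<Rightarrow> (nat \<Rightarrow> nat) \<Rightarrow> complex"
    and A :: "(nat \<Rightarrow> nat) \<Rightarrow> (nat \<Rightarrow> nat) \<Rightarrow> complex"
  assumes d2: "d \<ge> 2" and r1: "r \<ge> 1" and M: "M > 0" and nN: "n \<ge> 2 * r + 3"
    and on: "\<forall>j<d^n. \<forall>k<d^n. inner_st n d (b j) (b k) = (if j = k then 1 else 0)"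
    and eig: "\<forall>j<d^n. is_T_eigenvector n d (b j)"
    and loc: "r_local n d r A" and tr0: "trace_op n d A = 0" and onorm: "op_norm n d A \<le> M"
    and dl: "\<delta> \<ge> sqrt (16 * exp 1 * M\<^sup>2 * (real (2 * r))\<^sup>2) * sqrt (ln (real n) / real n)"
  shows "real (card {j. j < d^n \<and> cmod (diag_elem n d (b j) A) \<ge> \<delta>}) / real (d^n)
        \<le> exp (- (1 / (16 * exp 1 * M\<^sup>2 * (real (2 * r))\<^sup>2)) * real n * \<delta>\<^sup>2)"
proof -
  define R :: nat where "R = 2 * r"
  define cM :: real where "cM = 16 * exp 1 * M\<^sup>2 * (real R)\<^sup>2"
  define D :: nat where "D = d ^ n"
  have R2: "R \<ge> 2" unfolding R_def using r1 by simp
  have cM: "cM > 0" unfolding cM_def using M R2 by simp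
  have n0: "n > 0" and n3: "n \<ge> 3" and nr: "r \<le> n" and nR: "R \<le> n" using nN unfolding R_def by auto
  have d0: "d > 0" using d2 by simp
  have D0: "D > 0" unfolding D_def using d0 by simp
  have ln1: "ln (real n) \<ge> 1"
  proof -
    have "exp 1 \<le> real n" using exp_le n3 by linarith
    then show ?thesis using n0 ln_ge_iff[of "real n" 1] by simp
  qed
  have sq: "sqrt (ln (real n) / real n) > 0" using ln1 n0 n3 by (intro real_sqrt_gt_zero divide_pos_pos) auto
  have "sqrt (16 * exp 1 * M\<^sup>2 * (real (2 * r))\<^sup>2) > 0" using cM unfolding cM_def R_def by simp
  then have \<delta>: "\<delta> > 0" using dl mult_pos_pos[OF _ sq] by (meson order_less_le_trans)
  have \<delta>sq: "real n * \<delta>\<^sup>2 \<ge> cM * ln (real n)"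
  proof -
    have "(sqrt cM * sqrt (ln (real n) / real n))\<^sup>2 \<le> \<delta>\<^sup>2"
      using dl cM sq unfolding cM_def R_def by (intro power_mono) auto
    then have "cM * (ln (real n) / real n) \<le> \<delta>\<^sup>2"
      using cM ln1 n0 by (simp add: power_mult_distrib)
    then show ?thesis using n0 by (simp add: field_simps)
  qed
  obtain s where s: "s < n" and As: "acts_only_on n d {(s + k) mod n |k. k < r} A"
    using loc unfolding r_local_def by blast
  define X where "X t = trans_op n ((t + n - s) mod n) A" for t
  define Sp where "Sp t = {(t + j) mod n | j. j < r}" for t
  have nbA: "\<And>\<psi>. vnorm n d (apply_op n d A \<psi>) \<le> M * vnorm n d \<psi>"
    by (rule opnorm_bound[OF onorm])
  have Xaoo: "acts_only_on n d (Sp t) (X t)" if "t < n" for t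
    unfolding X_def Sp_def by (rule aoo_trans[OF n0 s that As])
  have Xtr: "trace_op n d (X t) = 0" for t unfolding X_def trace_trans by (rule tr0)
  have Xnb: "vnorm n d (apply_op n d (X t) \<psi>) \<le> M * vnorm n d \<psi>" for t \<psi>
    unfolding X_def by (rule norm_trans[OF nbA])
  define Kg where "Kg g = {t \<in> {..<n}. grp n r t = g}" for g
  have Kfin: "finite (Kg g)" for g unfolding Kg_def by simp
  have Kcard: "card (Kg g) \<le> n" for g
    using card_mono[of "{..<n}" "Kg g"] unfolding Kg_def by auto
  have Kdisj: "\<forall>t\<in>Kg g. \<forall>t'\<in>Kg g. t \<noteq> t' \<longrightarrow> Sp t \<inter> Sp t' = {}" for g
    unfolding Kg_def Sp_def using grp_disj[OF r1] by auto
  define z where "z g j = inner_st n d (b j) (apply_op n d (opsum (Kg g) X) (b j))" for g j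
  have decomp: "of_nat n * diag_elem n d (b j) A = (\<Sum>g<R. z g j)" if j: "j < D" for j
  proof -
    have v1: "vnorm n d (b j) = 1" using on j unfolding D_def by (intro vnorm_one) simp
    obtain \<mu> where mu: "cmod \<mu> = 1" "\<forall>k. \<forall>y\<in>configs n d. b j (rot n k y) = \<mu> ^ k * b j y"
      using eigen_rot[OF _ v1] eig j unfolding D_def by blast
    have eq: "inner_st n d (b j) (apply_op n d (X t) (b j)) = diag_elem n d (b j) A" for t
    proof -
      have "\<forall>y\<in>configs n d. b j (rot n ((t + n - s) mod n) y) = \<mu> ^ ((t + n - s) mod n) * b j y"
        using mu(2) by blast
      from diag_trans[OF mu(1) this, of A] show ?thesis unfolding diag_elem_def X_def by simp
    qed
    have "of_nat n * diag_elem n d (b j) A = (\<Sum>t<n. inner_st n d (b j) (apply_op n d (X t) (b j)))"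
      unfolding eq by simp
    also have "\<dots> = (\<Sum>g<R. \<Sum>t\<in>Kg g. inner_st n d (b j) (apply_op n d (X t) (b j)))"
      unfolding Kg_def
      by (rule sum.group[symmetric]) (use grp_lt[OF r1] in \<open>auto simp: R_def\<close>)
    also have "\<dots> = (\<Sum>g<R. z g j)" unfolding z_def inner_apply_opsum ..
    finally show ?thesis .
  qed
  define lam where "lam = real n * \<delta> / real R"
  have lam: "lam > 0" unfolding lam_def using n0 \<delta> R2 by simp
  have cover: "{j. j < D \<and> cmod (diag_elem n d (b j) A) \<ge> \<delta>} \<subseteq> (\<Union>g\<in>{..<R}. {j. j < D \<and> cmod (z g j) \<ge> lam})"
  proof
    fix j assume "j \<in> {j. j < D \<and> cmod (diag_elem n d (b j) A) \<ge> \<delta>}"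
    then have j: "j < D" and dj: "cmod (diag_elem n d (b j) A) \<ge> \<delta>" by auto
    show "j \<in> (\<Union>g\<in>{..<R}. {j. j < D \<and> cmod (z g j) \<ge> lam})"
    proof (rule ccontr)
      assume "\<not> ?thesis"
      then have lt: "\<And>g. g < R \<Longrightarrow> cmod (z g j) < lam" using j by (fastforce simp: not_le)
      have "real n * \<delta> \<le> real n * cmod (diag_elem n d (b j) A)" using dj n0 by simp
      also have "\<dots> = cmod (of_nat n * diag_elem n d (b j) A)" by (simp add: norm_mult)
      also have "\<dots> = cmod (\<Sum>g<R. z g j)" using decomp[OF j] by simp
      also have "\<dots> \<le> (\<Sum>g<R. cmod (z g j))" by (rule norm_sum)
      also have "\<dots> < (\<Sum>g<R. lam)"
      proof (rule sum_strict_mono)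
        show "{..<R} \<noteq> {}" using R2 by (metis lessThan_iff empty_iff zero_less_numeral less_le_trans)
      qed (use lt in auto)
      also have "\<dots> = real n * \<delta>" unfolding lam_def using R2 by simp
      finally show False by simp
    qed
  qed
  define Xr where "Xr = real n * \<delta>\<^sup>2 / (4 * exp 1 * M\<^sup>2 * (real R)\<^sup>2)"
  have Xr1: "Xr \<ge> 1"
  proof -
    have "cM * 1 \<le> cM * ln (real n)" using ln1 cM by (intro mult_left_mono) auto
    then have "real n * \<delta>\<^sup>2 \<ge> cM" using \<delta>sq by linarith
    then have "Xr \<ge> cM / (4 * exp 1 * M\<^sup>2 * (real R)\<^sup>2)"
      unfolding Xr_def using M R2 by (intro divide_right_mono) auto
    also have "cM / (4 * exp 1 * M\<^sup>2 * (real R)\<^sup>2) = 4" unfolding cM_def using M R2 by simp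
    finally show ?thesis by simp
  qed
  obtain m where m: "2 ^ m \<le> Xr" "Xr < 2 ^ Suc m" using exists_pow2[OF Xr1] by blast
  define q :: nat where "q = 2 ^ m"
  have per: "real (card {j. j < D \<and> cmod (z g j) \<ge> lam}) \<le> real D * exp (- (real n * \<delta>\<^sup>2 / (8 * exp 1 * M\<^sup>2 * (real R)\<^sup>2)))"
    for g
  proof -
    have "real (card {j. j < D \<and> cmod (z g j) \<ge> lam}) * lam ^ (2 * q) \<le> (\<Sum>j<D. cmod (z g j) ^ (2 * q))"
      by (rule markov_count[OF lam]) simp
    also have "\<dots> \<le> real (4 ^ q * (card (Kg g) * q) ^ q) * (real (d ^ n) * M ^ (2 * q))"
      unfolding z_def q_def
      by (rule group_moment[where Sp=Sp and X=X and K="Kg g", OF d0 Kfin less_imp_le[OF M]])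
         (use Xaoo Xtr Xnb Kdisj on in \<open>auto simp: Kg_def D_def\<close>)
    also have "\<dots> \<le> 4 ^ q * (real n * real q) ^ q * real D * M ^ (2 * q)"
    proof -
      have "real (4 ^ q * (card (Kg g) * q) ^ q) \<le> 4 ^ q * (real n * real q) ^ q"
        using Kcard[of g] by (simp add: power_mono mult_right_mono)
      then show ?thesis using M unfolding D_def by (simp add: mult_right_mono mult.assoc)
    qed
    finally have h: "real (card {j. j < D \<and> cmod (z g j) \<ge> lam}) * (real n * \<delta> / real R) ^ (2 * q)
        \<le> 4 ^ q * (real n * real q) ^ q * real D * M ^ (2 * q)" unfolding lam_def .
    show ?thesis
      by (rule pg_arith[OF _ _ _ \<delta> M _ h Xr_def]) (use D0 n0 R2 m in \<open>auto simp: q_def\<close>)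
  qed
  define E where "E = exp (- (real n * \<delta>\<^sup>2 / (8 * exp 1 * M\<^sup>2 * (real R)\<^sup>2)))"
  have "real (card {j. j < D \<and> cmod (diag_elem n d (b j) A) \<ge> \<delta>}) \<le> real (card (\<Union>g\<in>{..<R}. {j. j < D \<and> cmod (z g j) \<ge> lam}))"
    by (intro of_nat_mono card_mono cover) auto
  also have "\<dots> \<le> real (\<Sum>g<R. card {j. j < D \<and> cmod (z g j) \<ge> lam})"
    by (intro of_nat_mono card_UN_le) simp
  also have "\<dots> \<le> (\<Sum>g<R. real D * E)"
    unfolding of_nat_sum E_def by (intro sum_mono per)
  also have "\<dots> = real D * (real R * E)" by simp
  finally have tot: "real (card {j. j < D \<and> cmod (diag_elem n d (b j) A) \<ge> \<delta>}) / real D \<le> real R * E"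
    using D0 by (simp add: field_simps)
  define x where "x = (1 / cM) * real n * \<delta>\<^sup>2"
  have Ex: "E = exp (- x) * exp (- x)"
    unfolding E_def x_def cM_def using M R2 by (simp add: exp_add[symmetric] field_simps)
  have xln: "x \<ge> ln (real n)" unfolding x_def using \<delta>sq cM by (simp add: field_simps)
  have "real R \<le> exp x"
  proof -
    have "ln (real R) \<le> ln (real n)" using nR R2 by simp
    then have "ln (real R) \<le> x" using xln by linarith
    then have "exp (ln (real R)) \<le> exp x" by simp
    then show ?thesis using R2 by simp
  qed
  then have "real R * E \<le> exp x * exp (- x) * exp (- x)" unfolding Ex by (simp add: mult_right_mono)
  also have "\<dots> = exp (- x)" by (simp add: exp_minus field_simps)
  finally show ?thesis using tot unfolding D_def x_def cM_def R_def by simp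
qed

theorem lemma3:
  fixes d r :: nat and M :: real
  assumes "d \<ge> 2" and "r \<ge> 1" and "M > 0"
  shows "\<exists>C>0. \<exists>c>0. \<exists>N::nat. \<forall>n\<ge>N.
    \<forall>(b :: nat \<Rightarrow> (nat \<Rightarrow> nat) \<Rightarrow> complex)
     (A :: (nat \<Rightarrow> nat) \<Rightarrow> (nat \<Rightarrow> nat) \<Rightarrow> complex) (\<delta>::real).
      (\<forall>j<d^n. \<forall>k<d^n. inner_st n d (b j) (b k) = (if j = k then 1 else 0)) \<longrightarrow>
      (\<forall>j<d^n. is_T_eigenvector n d (b j)) \<longrightarrow>
      r_local n d r A \<longrightarrow> trace_op n d A = 0 \<longrightarrow> op_norm n d A \<le> M \<longrightarrow>
      \<delta> \<ge> C * sqrt (ln (real n) / real n) \<longrightarrow>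
      real (card {j. j < d^n \<and> cmod (diag_elem n d (b j) A) \<ge> \<delta>}) / real (d^n)
        \<le> exp (- c * real n * \<delta>\<^sup>2)"
proof -
  define cM where "cM = 16 * exp 1 * M\<^sup>2 * (real (2 * r))\<^sup>2"
  have cM: "cM > 0" unfolding cM_def using assms by simp
  show ?thesis
  proof (rule exI[of _ "sqrt cM"], intro conjI)
    show "sqrt cM > 0" using cM by simp
    show "\<exists>c>0. \<exists>N::nat. \<forall>n\<ge>N.
    \<forall>(b :: nat \<Rightarrow> (nat \<Rightarrow> nat) \<Rightarrow> complex)
     (A :: (nat \<Rightarrow> nat) \<Rightarrow> (nat \<Rightarrow> nat) \<Rightarrow> complex) (\<delta>::real).
      (\<forall>j<d^n. \<forall>k<d^n. inner_st n d (b j) (b k) = (if j = k then 1 else 0)) \<longrightarrow>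
      (\<forall>j<d^n. is_T_eigenvector n d (b j)) \<longrightarrow>
      r_local n d r A \<longrightarrow> trace_op n d A = 0 \<longrightarrow> op_norm n d A \<le> M \<longrightarrow>
      \<delta> \<ge> sqrt cM * sqrt (ln (real n) / real n) \<longrightarrow>
      real (card {j. j < d^n \<and> cmod (diag_elem n d (b j) A) \<ge> \<delta>}) / real (d^n)
        \<le> exp (- c * real n * \<delta>\<^sup>2)"
    proof (rule exI[of _ "1 / cM"], intro conjI)
      show "1 / cM > 0" using cM by simp
      show "\<exists>N::nat. \<forall>n\<ge>N.
    \<forall>(b :: nat \<Rightarrow> (nat \<Rightarrow> nat) \<Rightarrow> complex)
     (A :: (nat \<Rightarrow> nat) \<Rightarrow> (nat \<Rightarrow> nat) \<Rightarrow> complex) (\<delta>::real).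
      (\<forall>j<d^n. \<forall>k<d^n. inner_st n d (b j) (b k) = (if j = k then 1 else 0)) \<longrightarrow>
      (\<forall>j<d^n. is_T_eigenvector n d (b j)) \<longrightarrow>
      r_local n d r A \<longrightarrow> trace_op n d A = 0 \<longrightarrow> op_norm n d A \<le> M \<longrightarrow>
      \<delta> \<ge> sqrt cM * sqrt (ln (real n) / real n) \<longrightarrow>
      real (card {j. j < d^n \<and> cmod (diag_elem n d (b j) A) \<ge> \<delta>}) / real (d^n)
        \<le> exp (- (1 / cM) * real n * \<delta>\<^sup>2)"
      proof (rule exI[of _ "2 * r + 3"], intro allI impI)
        fix n b A \<delta>
        assume n: "n \<ge> 2 * r + 3"
          and h1: "\<forall>j<d^n. \<forall>k<d^n. inner_st n d (b j) (b k) = (if j = k then 1 else 0)"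
          and h2: "\<forall>j<d^n. is_T_eigenvector n d (b j)"
          and h3: "r_local n d r A" and h4: "trace_op n d A = 0" and h5: "op_norm n d A \<le> M"
          and h6: "\<delta> \<ge> sqrt cM * sqrt (ln (real n) / real n)"
        show "real (card {j. j < d^n \<and> cmod (diag_elem n d (b j) A) \<ge> \<delta>}) / real (d^n)
          \<le> exp (- (1 / cM) * real n * \<delta>\<^sup>2)"
          using main_bound[OF assms n h1 h2 h3 h4 h5 h6[unfolded cM_def]] unfolding cM_def .
      qed
    qed
  qed
qed

end
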